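(* Assume $\mu_Z\ge\eta$ and $\rho>\rho_0$. Then for every $z\ge0$ and $m\ge\beta^{1/(p-1)}$, the function $y\mapsto\hat v(y,z,m)$ on $[y^*(m),\beta]$ is continuous, strictly convex and decreasing.
   Context: Parameters: $\mu\in\mathbb R^d$, invertible $\sigma\in\mathbb R^{d\times d}$, $\mu_Z\in\mathbb R$, $\sigma_Z\ge0$, $\gamma\in\mathbb R^d$ with $|\gamma|=1$, $\rho>0$, $\beta>0$, $\lambda\in[0,1]$, $p<1$, $p\ne0$. Constants: $\alpha=\frac12\mu^\top(\sigma\sigma^\top)^{-1}\mu$, $\eta=\sigma_Z\gamma^\top\sigma^{-1}\mu$, $\kappa=\frac{-(\rho-\eta-\alpha)+\sqrt{(\rho-\eta-\alpha)^2+4\alpha(\rho-\mu_Z)}}{2\alpha}$, and $\rho_0=\max\{\mu_Z,2\alpha,\alpha p/(1-p)\}$ if $p\in(0,1)$, $\rho_0=\max\{\mu_Z,0\}$ if $p<0$. Free boundary. For $m\in[\beta^{1/(p-1)},\lambda^{-1}\beta^{1/(p-1)})$ (all $m\ge\beta^{1/(p-1)}$ if $\lambda=0$) put $y^*(m)=m^{p-1}$; for $\lambda>0$ and $m\ge\lambda^{-1}\beta^{1/(p-1)}$, $y^*(m)$ is the unique $y\in(0,m^{p-1}]$ solving \[ \tfrac{\beta m^{p-1}}{(\alpha+\rho)y}+\tfrac{\beta}{\alpha+\rho}\ln\tfrac{y}{\beta}+\tfrac{\rho}{(\alpha+\rho)^2}\beta^{-\rho/\alpha}y^{\frac{\alpha+\rho}{\alpha}}-\tfrac{m^{p-1}}{\alpha+\rho}\beta^{-\rho/\alpha}y^{\rho/\alpha}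 =\tfrac{\alpha\beta^{-\rho/\alpha}}{(\alpha+\rho)^2}\big(\lambda^{\frac{\alpha p-(1-p)\rho}{\alpha}}-1\big)m^{-\frac{(\alpha+\rho)(1-p)}{\alpha}}+\tfrac{\beta\lambda}{\alpha+\rho}\ln(\beta(\lambda m)^{1-p})-\tfrac{\beta}{\alpha+\rho}\ln(\beta m^{1-p})+\tfrac{\lambda\beta}{\alpha+\rho}-\tfrac{\alpha\beta}{(\alpha+\rho)^2}+\tfrac{(1-p)^2\beta(\lambda-1)}{p(\alpha+\rho)}-\tfrac{\beta(\alpha+\rho+p\alpha)(\lambda-1)}{p(\alpha+\rho)^2}+\tfrac{\beta(1-p)(\lambda-1)}{\alpha+\rho}. \] Coefficients (for $m\ge\beta^{1/(p-1)}$): $C_6(m)=\int_m^\infty\big(\frac{\alpha}{\rho(\alpha+\rho)}\ell^{p-1}\beta^{-\rho/\alpha}y^*(\ell)^{\rho/\alpha}-\frac{\alpha\beta}{(\alpha+\rho)^2}\beta^{-\frac{\alpha+\rho}{\alpha}}y^*(\ell)^{\frac{\alpha+\rho}{\alpha}}\big)d\ell$. With $A(m)=\frac{\alpha^2\beta^{-\rho/\alpha}}{(\alpha+\rho)^2(\rho(1-p)-\alpha p)}\big(\lambda^{\frac{\alpha p-(1-p)\rho}{\alpha}}-1\big)m^{\frac{\alpha p-(1-p)\rho}{\alpha}}$ (used only when $\lambda>0$) and $B(m)=\frac{\alpha^2\beta^{-\rho/\alpha}}{(\alpha+\rho)^2(\rho(1-p)-\alpha p)}m^{\frac{\alpha p-(1-p)\rho}{\alpha}}$: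 $C_1=A-\frac{\lambda\beta m}{\alpha+\rho}+\frac{\rho}{\alpha}C_6$; $C_2=\frac{\alpha}{\rho}A+C_6$; $C_4=-\frac{\alpha}{\rho}B+C_6$; for $\lambda>0$, $m\ge\lambda^{-1}\beta^{1/(p-1)}$: $C_3=A+\frac{\rho}{\alpha}C_6+\frac{\beta m}{\alpha+\rho}\big[\frac{(\alpha+\rho-p\rho-(1-p)^2(\alpha+\rho))\lambda}{p(\alpha+\rho)}-\lambda\ln(\beta(\lambda m)^{1-p})\big]$ and $C_5=\frac{\beta m}{\alpha+\rho}\big[-1+(1-\lambda)\frac{(1-p)^2(\alpha+\rho)-\alpha-\rho+p\rho}{p(\alpha+\rho)}-\lambda\ln(\beta(\lambda m)^{1-p})+\ln(\beta m^{1-p})\big]+A+\frac{\rho}{\alpha}C_6$; otherwise $C_3=-B+\frac{(1-p)^2\beta^{p/(p-1)}}{\rho(1-p)-\alpha p}+\frac{\rho}{\alpha}C_6$ and $C_5=-B+\frac{(1-p)^2\beta^{p/(p-1)}}{\rho(1-p)-\alpha p}+\frac{\rho}{\alpha}C_6+\frac{\beta m}{\alpha+\rho}\big[\frac{(1-p)^2}{p}-\frac{\alpha p+\alpha+\rho}{p(\alpha+\rho)}+\ln(\beta m^{1-p})\big]$. Dual function. For $z\ge0$, $m\ge\beta^{1/(p-1)}$, $y\in[y^*(m),\beta]$, with $\psi(y)=y-\frac{\beta^{1-\kappa}}{\kappa}y^\kappa$: $\hat v(y,z,m)=\frac1\beta C_1(m)y+\beta^{\rho/\alpha}C_2(m)y^{-\rho/\alpha}+\frac{(\lambda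 m)^p}{p\rho}+\frac{\lambda m}{\alpha+\rho}y\ln\frac y\beta+z\psi(y)$ if $(\lambda m)^{p-1}<y\le\beta$; $\hat v=\frac1\beta C_3(m)y+\beta^{\rho/\alpha}C_4(m)y^{-\rho/\alpha}+\frac{(1-p)^3}{p(\rho(1-p)-\alpha p)}y^{\frac{p}{p-1}}+z\psi(y)$ if $m^{p-1}<y\le(\lambda m)^{p-1}$; $\hat v=\frac1\beta C_5(m)y+\beta^{\rho/\alpha}C_6(m)y^{-\rho/\alpha}+\frac{m^p}{p\rho}+\frac{m}{\alpha+\rho}y\ln\frac y\beta+z\psi(y)$ if $y^*(m)\le y\le m^{p-1}$. *)

theory Defs
  imports "HOL-Analysis.Analysis"
begin

definition strict_convex_on :: "real set \<Rightarrow> (real \<Rightarrow> real) \<Rightarrow> bool" where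
  "strict_convex_on S f \<longleftrightarrow> convex S \<and>
    (\<forall>x\<in>S. \<forall>y\<in>S. x \<noteq> y \<longrightarrow> (\<forall>t. 0 < t \<and> t < 1 \<longrightarrow>
        f ((1 - t) * x + t * y) < (1 - t) * f x + t * f y))"

definition alphaC :: "real^'n \<Rightarrow> real^'n^'n \<Rightarrow> real" where
  "alphaC mu sig = (1/2) * (mu \<bullet> (matrix_inv (sig ** transpose sig) *v mu))"

definition etaC :: "real^'n \<Rightarrow> real^'n^'n \<Rightarrow> real \<Rightarrow> real^'n \<Rightarrow> real" where
  "etaC mu sig sZ gam = sZ * (gam \<bullet> (matrix_inv sig *v mu))"

definition kappaC :: "real \<Rightarrow> real \<Rightarrow> real \<Rightarrow> real \<Rightarrow> real" where
  "kappaC a e rho muZ =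
     (- (rho - e - a) + sqrt ((rho - e - a)^2 + 4 * a * (rho - muZ))) / (2 * a)"

definition rho0C :: "real \<Rightarrow> real \<Rightarrow> real \<Rightarrow> real" where
  "rho0C a muZ p = (if 0 < p then max muZ (max (2 * a) (a * p / (1 - p))) else max muZ 0)"

definition fbLHS :: "real \<Rightarrow> real \<Rightarrow> real \<Rightarrow> real \<Rightarrow> real \<Rightarrow> real \<Rightarrow> real" where
  "fbLHS a rho b p m y =
     b * m powr (p - 1) / ((a + rho) * y) + b / (a + rho) * ln (y / b)
     + rho / (a + rho)^2 * b powr (- rho / a) * y powr ((a + rho) / a)
     - m powr (p - 1) / (a + rho) * b powr (- rho / a) * y powr (rho / a)"

definition fbRHS :: "real \<Rightarrow> real \<Rightarrow> real \<Rightarrow> real \<Rightarrow> real \<Rightarrow> real \<Rightarrow> real" where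
  "fbRHS a rho b lam p m =
     a * b powr (- rho / a) / (a + rho)^2 * (lam powr ((a * p - (1 - p) * rho) / a) - 1)
        * m powr (- ((a + rho) * (1 - p) / a))
     + b * lam / (a + rho) * ln (b * (lam * m) powr (1 - p))
     - b / (a + rho) * ln (b * m powr (1 - p))
     + lam * b / (a + rho) - a * b / (a + rho)^2
     + (1 - p)^2 * b * (lam - 1) / (p * (a + rho))
     - b * (a + rho + p * a) * (lam - 1) / (p * (a + rho)^2)
     + b * (1 - p) * (lam - 1) / (a + rho)"

definition ystar :: "real \<Rightarrow> real \<Rightarrow> real \<Rightarrow> real \<Rightarrow> real \<Rightarrow> real \<Rightarrow> real" where
  "ystar a rho b lam p m =
     (if 0 < lam \<and> m \<ge> b powr (1 / (p - 1)) / lam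
      then (THE y. 0 < y \<and> y \<le> m powr (p - 1) \<and> fbLHS a rho b p m y = fbRHS a rho b lam p m)
      else m powr (p - 1))"

definition C6 :: "real \<Rightarrow> real \<Rightarrow> real \<Rightarrow> real \<Rightarrow> real \<Rightarrow> real \<Rightarrow> real" where
  "C6 a rho b lam p m = integral {m..} (\<lambda>l.
      a / (rho * (a + rho)) * l powr (p - 1) * b powr (- rho / a)
        * (ystar a rho b lam p l) powr (rho / a)
      - a * b / (a + rho)^2 * b powr (- ((a + rho) / a))
        * (ystar a rho b lam p l) powr ((a + rho) / a))"

definition Acoef :: "real \<Rightarrow> real \<Rightarrow> real \<Rightarrow> real \<Rightarrow> real \<Rightarrow> real \<Rightarrow> real" where
  "Acoef a rho b lam p m =
     a^2 * b powr (- rho / a) / ((a + rho)^2 * (rho * (1 - p) - a * p))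
     * (lam powr ((a * p - (1 - p) * rho) / a) - 1) * m powr ((a * p - (1 - p) * rho) / a)"

definition Bcoef :: "real \<Rightarrow> real \<Rightarrow> real \<Rightarrow> real \<Rightarrow> real \<Rightarrow> real" where
  "Bcoef a rho b p m =
     a^2 * b powr (- rho / a) / ((a + rho)^2 * (rho * (1 - p) - a * p))
     * m powr ((a * p - (1 - p) * rho) / a)"

definition C1 :: "real \<Rightarrow> real \<Rightarrow> real \<Rightarrow> real \<Rightarrow> real \<Rightarrow> real \<Rightarrow> real" where
  "C1 a rho b lam p m = Acoef a rho b lam p m - lam * b * m / (a + rho) + rho / a * C6 a rho b lam p m"

definition C2 :: "real \<Rightarrow> real \<Rightarrow> real \<Rightarrow> real \<Rightarrow> real \<Rightarrow> real \<Rightarrow> real" where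
  "C2 a rho b lam p m = a / rho * Acoef a rho b lam p m + C6 a rho b lam p m"

definition C4 :: "real \<Rightarrow> real \<Rightarrow> real \<Rightarrow> real \<Rightarrow> real \<Rightarrow> real \<Rightarrow> real" where
  "C4 a rho b lam p m = - (a / rho) * Bcoef a rho b p m + C6 a rho b lam p m"

definition C3 :: "real \<Rightarrow> real \<Rightarrow> real \<Rightarrow> real \<Rightarrow> real \<Rightarrow> real \<Rightarrow> real" where
  "C3 a rho b lam p m =
     (if 0 < lam \<and> m \<ge> b powr (1 / (p - 1)) / lam
      then Acoef a rho b lam p m + rho / a * C6 a rho b lam p m
           + b * m / (a + rho) *
             ((a + rho - p * rho - (1 - p)^2 * (a + rho)) * lam / (p * (a + rho))
              - lam * ln (b * (lam * m) powr (1 - p)))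
      else - Bcoef a rho b p m + (1 - p)^2 * b powr (p / (p - 1)) / (rho * (1 - p) - a * p)
           + rho / a * C6 a rho b lam p m)"

definition C5 :: "real \<Rightarrow> real \<Rightarrow> real \<Rightarrow> real \<Rightarrow> real \<Rightarrow> real \<Rightarrow> real" where
  "C5 a rho b lam p m =
     (if 0 < lam \<and> m \<ge> b powr (1 / (p - 1)) / lam
      then b * m / (a + rho) *
             (- 1 + (1 - lam) * ((1 - p)^2 * (a + rho) - a - rho + p * rho) / (p * (a + rho))
              - lam * ln (b * (lam * m) powr (1 - p)) + ln (b * m powr (1 - p)))
           + Acoef a rho b lam p m + rho / a * C6 a rho b lam p m
      else - Bcoef a rho b p m + (1 - p)^2 * b powr (p / (p - 1)) / (rho * (1 - p) - a * p)
           + rho / a * C6 a rho b lam p m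
           + b * m / (a + rho) *
             ((1 - p)^2 / p - (a * p + a + rho) / (p * (a + rho)) + ln (b * m powr (1 - p))))"

definition psiC :: "real \<Rightarrow> real \<Rightarrow> real \<Rightarrow> real" where
  "psiC k b y = y - b powr (1 - k) / k * y powr k"

(* the dual function v-hat(y,z,m); the region (lam m)^(p-1) < y is read as empty when lam = 0 *)
definition vhat :: "real \<Rightarrow> real \<Rightarrow> real \<Rightarrow> real \<Rightarrow> real \<Rightarrow> real \<Rightarrow> real \<Rightarrow> real \<Rightarrow> real \<Rightarrow> real" where
  "vhat a rho b lam p k y z m =
     (if 0 < lam \<and> (lam * m) powr (p - 1) < y then
        1 / b * C1 a rho b lam p m * y + b powr (rho / a) * C2 a rho b lam p m * y powr (- rho / a)
        + (lam * m) powr p / (p * rho) + lam * m / (a + rho) * y * ln (y / b) + z * psiC k b y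
      else if m powr (p - 1) < y then
        1 / b * C3 a rho b lam p m * y + b powr (rho / a) * C4 a rho b lam p m * y powr (- rho / a)
        + (1 - p)^3 / (p * (rho * (1 - p) - a * p)) * y powr (p / (p - 1)) + z * psiC k b y
      else
        1 / b * C5 a rho b lam p m * y + b powr (rho / a) * C6 a rho b lam p m * y powr (- rho / a)
        + m powr p / (p * rho) + m / (a + rho) * y * ln (y / b) + z * psiC k b y)"

end

theory Submission
  imports Defs
begin

definition glue :: "real \<Rightarrow> (real \<Rightarrow> real) \<Rightarrow> (real \<Rightarrow> real) \<Rightarrow> real \<Rightarrow> real" where
  "glue x0 F H y = (if y \<le> x0 then F y else H y)"

lemma glue_deriv_at:
  assumes F: "(F has_real_derivative d) (at x0)" and H: "(H has_real_derivative d) (at x0)"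
    and eq: "F x0 = H x0"
  shows "(glue x0 F H has_real_derivative d) (at x0)"
proof -
  let ?G = "glue x0 F H"
  have "((\<lambda>y. (F y - F x0) / (y - x0)) \<longlongrightarrow> d) (at x0)" using F by (simp add: has_field_derivative_iff)
  hence l: "((\<lambda>y. (F y - F x0) / (y - x0)) \<longlongrightarrow> d) (at_left x0)" by (simp add: filterlim_at_split)
  have "((\<lambda>y. (H y - H x0) / (y - x0)) \<longlongrightarrow> d) (at x0)" using H by (simp add: has_field_derivative_iff)
  hence r: "((\<lambda>y. (H y - H x0) / (y - x0)) \<longlongrightarrow> d) (at_right x0)" by (simp add: filterlim_at_split)
  have el: "eventually (\<lambda>y. (F y - F x0) / (y - x0) = (?G y - ?G x0) / (y - x0)) (at_left x0)"
    using eventually_at_left_real[of "x0 - 1" x0] by (auto elim!: eventually_mono simp: glue_def)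
  have er: "eventually (\<lambda>y. (H y - H x0) / (y - x0) = (?G y - ?G x0) / (y - x0)) (at_right x0)"
    using eventually_at_right_real[of x0 "x0 + 1"] eq by (auto elim!: eventually_mono simp: glue_def)
  have "((\<lambda>y. (?G y - ?G x0) / (y - x0)) \<longlongrightarrow> d) (at_left x0)" using tendsto_cong[OF el] l by simp
  moreover have "((\<lambda>y. (?G y - ?G x0) / (y - x0)) \<longlongrightarrow> d) (at_right x0)" using tendsto_cong[OF er] r by simp
  ultimately show ?thesis by (simp add: has_field_derivative_iff filterlim_at_split)
qed

lemma glue_deriv:
  assumes F: "\<And>y. y > 0 \<Longrightarrow> (F has_real_derivative F' y) (at y)"
    and H: "\<And>y. y > 0 \<Longrightarrow> (H has_real_derivative H' y) (at y)"
    and x0: "x0 > 0" and eq: "F x0 = H x0" and eq': "F' x0 = H' x0" and y: "y > 0"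
  shows "(glue x0 F H has_real_derivative glue x0 F' H' y) (at y)"
proof (cases "y < x0")
  case True
  have "(F has_real_derivative F' y) (at y)" using F y by auto
  hence "(glue x0 F H has_real_derivative F' y) (at y)"
    apply (rule has_field_derivative_transform_within_open[where S="{..<x0}"])
    using True by (auto simp: glue_def)
  moreover have "glue x0 F' H' y = F' y" using True by (simp add: glue_def)
  ultimately show ?thesis by simp
next
  case False
  show ?thesis
  proof (cases "y = x0")
    case True
    have dF: "(F has_real_derivative F' x0) (at x0)" by (rule F[OF x0])
    have dH: "(H has_real_derivative F' x0) (at x0)" using H[OF x0] eq' by simp
    have "(glue x0 F H has_real_derivative F' x0) (at x0)" using glue_deriv_at[OF dF dH eq] .
    moreover have "glue x0 F' H' x0 = F' x0" by (simp add: glue_def)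
    ultimately show ?thesis using True by simp
  next
    case False
    hence "y > x0" using \<open>\<not> y < x0\<close> by simp
    have "(H has_real_derivative H' y) (at y)" using H y by auto
    hence "(glue x0 F H has_real_derivative H' y) (at y)"
      apply (rule has_field_derivative_transform_within_open[where S="{x0<..}"])
      using \<open>y > x0\<close> by (auto simp: glue_def)
    moreover have "glue x0 F' H' y = H' y" using \<open>y > x0\<close> by (simp add: glue_def)
    ultimately show ?thesis by simp
  qed
qed

lemma glue_strict_mono:
  assumes F: "strict_mono_on {lo..x0} F" and H: "strict_mono_on {x0..hi} H"
    and eq: "F x0 = H x0"
  shows "strict_mono_on {lo..hi} (glue x0 F H)"
proof (rule strict_mono_onI)
  fix u v assume u: "u \<in> {lo..hi}" and v: "v \<in> {lo..hi}" and uv: "u < v"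
  show "glue x0 F H u < glue x0 F H v"
  proof (cases "v \<le> x0")
    case True
    then show ?thesis using F u v uv by (auto simp: glue_def strict_mono_on_def)
  next
    case False
    note v' = this
    show ?thesis
    proof (cases "u \<le> x0")
      case True
      have "F u \<le> F x0" using F u True
        by (cases "u = x0") (auto simp: strict_mono_on_def intro: less_imp_le)
      also have "\<dots> = H x0" by (rule eq)
      also have "\<dots> < H v" using H v v' by (auto simp: strict_mono_on_def)
      finally show ?thesis using True v' by (simp add: glue_def)
    next
      case False
      then show ?thesis using H u v uv v' by (auto simp: glue_def strict_mono_on_def)
    qed
  qed
qed

lemma mvt_g:
  fixes f g :: "real \<Rightarrow> real"
  assumes "u < v" "continuous_on {u..v} f" "\<And>x. u < x \<Longrightarrow> x < v \<Longrightarrow> (f has_real_derivative g x) (at x)"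
  shows "\<exists>z. u < z \<and> z < v \<and> f v - f u = g z * (v - u)"
proof -
  obtain l z where z: "u < z" "z < v" and d: "DERIV f z :> l" and e: "f v - f u = (v - u) * l"
    using MVT[OF assms(1,2)] assms(3) real_differentiable_def by metis
  have "l = g z" using DERIV_unique[OF d assms(3)[OF z]] .
  then show ?thesis using z e by (auto simp: mult.commute)
qed

lemma convex_from_deriv:
  fixes f g :: "real \<Rightarrow> real"
  assumes lohi: "lo \<le> hi"
    and cont: "continuous_on {lo..hi} f"
    and der: "\<And>y. lo < y \<Longrightarrow> y < hi \<Longrightarrow> (f has_real_derivative g y) (at y)"
    and mono: "strict_mono_on {lo..hi} g"
    and end0: "g hi \<le> 0"
  shows "strict_convex_on {lo..hi} f \<and> antimono_on {lo..hi} f"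
proof
  show "strict_convex_on {lo..hi} f"
    unfolding strict_convex_on_def
  proof (intro conjI ballI allI impI)
    show "convex {lo..hi}" by simp
    fix x y and t :: real assume x: "x \<in> {lo..hi}" and y: "y \<in> {lo..hi}" and xy: "x \<noteq> y" and t: "0 < t \<and> t < 1"
    have key: "f ((1 - t) * u + t * v) < (1 - t) * f u + t * f v"
      if u: "u \<in> {lo..hi}" and v: "v \<in> {lo..hi}" and uv: "u < v" and t: "0 < t" "t < 1" for u v t
    proof -
      define w where "w = (1 - t) * u + t * v"
      have uw: "u < w" using uv t by (simp add: w_def algebra_simps)
      have wv: "w < v" using mult_strict_left_mono[OF uv, of "1-t"] t unfolding w_def
        by (simp add: algebra_simps)
      have contuw: "continuous_on {u..w} f" using cont u v uw wv
        by (auto intro: continuous_on_subset)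
      have contwv: "continuous_on {w..v} f" using cont u v uw wv
        by (auto intro: continuous_on_subset)
      obtain \<xi>1 where x1: "u < \<xi>1" "\<xi>1 < w" and e1: "f w - f u = g \<xi>1 * (w - u)"
        using mvt_g[OF uw contuw, of g] der u v wv by auto
      obtain \<xi>2 where x2: "w < \<xi>2" "\<xi>2 < v" and e2: "f v - f w = g \<xi>2 * (v - w)"
        using mvt_g[OF wv contwv, of g] der u v uw by auto
      have "g \<xi>1 < g \<xi>2" using mono x1 x2 u v by (auto simp: strict_mono_on_def)
      have wu: "w - u = t * (v - u)" by (simp add: w_def algebra_simps)
      have vw: "v - w = (1 - t) * (v - u)" by (simp add: w_def algebra_simps)
      have E1: "f w - f u = g \<xi>1 * t * (v - u)" using e1 wu by simp
      have E2: "f v - f w = g \<xi>2 * (1 - t) * (v - u)" using e2 vw by simp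
      have A: "(1 - t) * (f w - f u) = g \<xi>1 * (t * (1 - t) * (v - u))"
        unfolding E1 by (simp add: algebra_simps)
      have B: "t * (f v - f w) = g \<xi>2 * (t * (1 - t) * (v - u))"
        unfolding E2 by (simp add: algebra_simps)
      have pos: "t * (1 - t) * (v - u) > 0" using t uv by simp
      have "(1 - t) * (f w - f u) < t * (f v - f w)"
        unfolding A B using mult_strict_right_mono[OF \<open>g \<xi>1 < g \<xi>2\<close> pos] .
      hence "f w < (1 - t) * f u + t * f v" by (simp add: algebra_simps)
      then show ?thesis unfolding w_def .
    qed
    show "f ((1 - t) * x + t * y) < (1 - t) * f x + t * f y"
    proof (cases "x < y")
      case True then show ?thesis using key x y t by auto
    next
      case False
      hence "y < x" using xy by simp
      from key[OF y x this, of "1 - t"] t show ?thesis by (simp add: algebra_simps)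
    qed
  qed
next
  show "antimono_on {lo..hi} f"
  proof (rule monotone_onI)
    fix u v assume u: "u \<in> {lo..hi}" and v: "v \<in> {lo..hi}" and uv: "u \<le> v"
    show "f v \<le> f u"
    proof (cases "u = v")
      case True then show ?thesis by simp
    next
      case False
      hence uv': "u < v" using uv by simp
      have cuv: "continuous_on {u..v} f" using cont u v by (auto intro: continuous_on_subset)
      obtain \<xi> where x: "u < \<xi>" "\<xi> < v" and e: "f v - f u = g \<xi> * (v - u)"
        using mvt_g[OF uv' cuv, of g] der u v by auto
      have "g \<xi> < g hi" using mono x u v by (auto simp: strict_mono_on_def)
      hence "g \<xi> < 0" using end0 by simp
      then show ?thesis using e uv' mult_neg_pos[of "g \<xi>" "v - u"] by simp
    qed
  qed
qed

context
  fixes a rho b lam p :: real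
  assumes a: "a > 0" and rho: "rho > 0" and b: "b > 0" and lam0: "0 \<le> lam" and lam1: "lam \<le> 1"
    and p1: "p < 1" and p0: "p \<noteq> 0" and Dpos: "rho * (1 - p) - a * p > 0"
begin

lemma fbLHS_deriv:
  assumes y: "y > 0"
  shows "((\<lambda>y. fbLHS a rho b p l y) has_real_derivative
    (y - l powr (p-1))/y * (b/((a+rho)*y) + rho/(a*(a+rho)) * b powr (-rho/a) * y powr (rho/a))) (at y)"
proof -
  have apr: "a + rho \<noteq> 0" using a rho by simp
  define S where "S = a + rho"
  have S: "S > 0" using a rho by (simp add: S_def)
  have rho_eq: "rho = S - a" by (simp add: S_def)
  have yne: "y \<noteq> 0" using y by simp
  have bne: "b \<noteq> 0" using b by simp
  have h1: "y powr ((a+rho)/a - 1) = y powr (rho/a)" using a by (simp add: field_simps)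
  have h2: "y powr (rho/a - 1) = y powr (rho/a) / y" using y by (simp add: powr_diff)
  show ?thesis unfolding fbLHS_def
    apply (rule derivative_eq_intros refl | simp add: y b apr yne bne)+
    apply (simp only: h1 h2)
    apply (simp only: flip: S_def)
    using a b y S yne by (simp add: field_simps power2_eq_square rho_eq)
qed

lemma fbLHS_cont:
  assumes "y1 > 0"
  shows "continuous_on {y1..y2} (\<lambda>y. fbLHS a rho b p l y)"
proof (rule continuous_at_imp_continuous_on, intro ballI)
  fix x assume "x \<in> {y1..y2}"
  hence x: "x > 0" using assms by simp
  show "isCont (fbLHS a rho b p l) x" using DERIV_isCont[OF fbLHS_deriv[OF x]] .
qed

lemma fbLHS_strict_dec:
  assumes y1: "0 < y1" and y12: "y1 < y2" and y2: "y2 \<le> l powr (p-1)"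
  shows "fbLHS a rho b p l y2 < fbLHS a rho b p l y1"
proof (rule DERIV_neg_imp_decreasing_open[OF y12])
  fix x assume x1: "y1 < x" and x2: "x < y2"
  have x: "x > 0" using x1 y1 by simp
  have pos: "b/((a+rho)*x) + rho/(a*(a+rho)) * b powr (-rho/a) * x powr (rho/a) > 0"
    using a rho b x by (intro add_pos_nonneg) auto
  have "(x - l powr (p-1))/x < 0" using x x2 y2 by (simp add: divide_neg_pos)
  hence "(x - l powr (p-1))/x * (b/((a+rho)*x) + rho/(a*(a+rho)) * b powr (-rho/a) * x powr (rho/a)) < 0"
    using mult_neg_pos[OF _ pos] by blast
  then show "\<exists>y. ((\<lambda>y. fbLHS a rho b p l y) has_real_derivative y) (at x) \<and> y < 0"
    using fbLHS_deriv[OF x, of l] by blast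
next
  show "continuous_on {y1..y2} (\<lambda>y. fbLHS a rho b p l y)" using fbLHS_cont y1 by blast
qed

lemma fbRHS_ge:
  assumes lam: "lam > 0" and l: "l > 0"
  shows "fbLHS a rho b p l (l powr (p-1)) \<le> fbRHS a rho b lam p l"
proof -
  define N where "N = l powr (p-1)"
  define Lq where "Lq = l powr (- ((a + rho) * (1 - p) / a))"
  define W where "W = b * (lam * l) powr (1 - p)"
  define q where "q = (a + rho) / a"
  define V where "V = W powr (- q)"
  define Bm where "Bm = b powr (- rho / a)"
  have N: "N > 0" using l by (simp add: N_def)
  define S where "S = a + rho"
  have S: "S > 0" using a rho by (simp add: S_def)
  have rho_eq: "rho = S - a" by (simp add: S_def)
  have Lq: "Lq > 0" using l by (simp add: Lq_def)
  have W: "W > 0" using l lam b by (simp add: W_def)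
  have Bm: "Bm > 0" using b by (simp add: Bm_def)
  have V: "V > 0" using W by (simp add: V_def)
  have q: "q > 0" using a rho by (simp add: q_def)
  have e1: "(p - 1) * ((a + rho) / a) = - ((a + rho) * (1 - p) / a)" using a by (simp add: field_simps)
  have f1: "N powr ((a + rho) / a) = Lq" unfolding N_def Lq_def powr_powr e1 ..
  have e2: "(p - 1) * (rho / a) = - ((a + rho) * (1 - p) / a) - (p - 1)" using a by (simp add: field_simps)
  have f2: "N powr (rho / a) = Lq / N" unfolding N_def Lq_def powr_powr e2 by (rule powr_diff)
  have f3: "ln (N / b) = (p - 1) * ln l - ln b" using l b by (simp add: N_def ln_div ln_powr)
  have f4: "ln (b * (lam * l) powr (1 - p)) = ln b + (1 - p) * (ln lam + ln l)"
    using l b lam by (simp add: ln_mult ln_powr)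
  have f5: "ln (b * l powr (1 - p)) = ln b + (1 - p) * ln l"
    using l b by (simp add: ln_mult ln_powr)
  have lW: "ln W = ln b + (1 - p) * (ln lam + ln l)" using f4 by (simp add: W_def)
  have "ln (lam powr ((a * p - (1 - p) * rho) / a) * (Bm * Lq)) = ln (lam * b * V)"
    using lam b l W a unfolding Bm_def Lq_def V_def q_def
    by (simp add: ln_mult ln_powr lW field_simps)
  hence f7: "lam powr ((a * p - (1 - p) * rho) / a) = lam * b * V / (Bm * Lq)"
    using lam b V Bm Lq by (simp add: field_simps)
  have id: "fbRHS a rho b lam p l - fbLHS a rho b p l N
      = b * lam / (a + rho)^2 * (a * V + (a + rho) * ln W - a)"
    unfolding fbRHS_def fbLHS_def
    apply (simp only: f1 f2 f3 f4 f5 f7 lW flip: Bm_def Lq_def N_def)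
    apply (simp only: flip: S_def)
    using a b lam N Lq Bm V p0 S by (simp add: field_simps power2_eq_square rho_eq)
  have "ln (W powr q) \<ge> 1 - 1 / (W powr q)"
    using ln_le_minus_one[of "1 / W powr q"] W by (simp add: ln_div)
  hence "q * ln W \<ge> 1 - V" using W by (simp add: ln_powr V_def powr_minus divide_inverse)
  hence "(a + rho) * ln W \<ge> a * (1 - V)" using a unfolding q_def
    by (simp add: field_simps)
  hence "a * V + (a + rho) * ln W - a \<ge> 0" by (simp add: algebra_simps)
  hence "b * lam / (a + rho)^2 * (a * V + (a + rho) * ln W - a) \<ge> 0"
    using b lam by simp
  then show ?thesis using id by (simp add: N_def)
qed

lemma fbLHS_big:
  assumes l: "l > 0"
  shows "\<exists>y0. 0 < y0 \<and> y0 \<le> l powr (p-1) \<and> fbLHS a rho b p l y0 \<ge> R"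
proof -
  define N where "N = l powr (p-1)"
  define Bm where "Bm = b powr (- rho / a)"
  define K where "K = b * ln (N / b) - N * Bm * N powr (rho / a)"
  define T0 where "T0 = (a + rho) * R - K"
  define c where "c = 3 + \<bar>T0\<bar> / b"
  define y0 where "y0 = N / c^2"
  have N: "N > 0" using l by (simp add: N_def)
  have Bm: "Bm > 0" using b by (simp add: Bm_def)
  have c3: "c \<ge> 3" using b by (simp add: c_def)
  have c: "c > 0" using c3 by simp
  have y0: "y0 > 0" using N c by (simp add: y0_def)
  have c2: "c^2 \<ge> 1" using c3 by (simp add: power2_eq_square) (metis less_1_mult less_eq_real_def linorder_not_less mult_le_cancel_left1 numeral_le_iff one_le_numeral order_trans semiring_norm(69))
  have y0N: "y0 \<le> N" unfolding y0_def using N c2 by (simp add: divide_le_eq)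
  have apr: "a + rho > 0" using a rho by simp
  have g1: "b * N / y0 = b * c^2" using N c by (simp add: y0_def field_simps)
  define S where "S = a + rho"
  have S: "S > 0" using apr by (simp add: S_def)
  have g2: "ln (y0 / b) = ln (N / b) - 2 * ln c"
    using N c b by (simp add: y0_def ln_div ln_mult power2_eq_square)
  have g3: "ln c \<le> c - 1" using ln_le_minus_one[OF c] .
  have "(a + rho) * fbLHS a rho b p l y0 = b * c^2 + b * ln (y0 / b)
        + rho / (a + rho) * Bm * y0 powr ((a + rho) / a) - N * Bm * y0 powr (rho / a)"
    unfolding fbLHS_def
    apply (simp only: flip: S_def N_def Bm_def g1)
    using S by (simp add: field_simps power2_eq_square)
  moreover have "b * ln (y0 / b) \<ge> b * ln (N / b) - 2 * b * c + 2 * b"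
  proof -
    have "ln (y0 / b) \<ge> ln (N / b) - 2 * (c - 1)" unfolding g2 using g3 by simp
    hence "b * ln (y0 / b) \<ge> b * (ln (N / b) - 2 * (c - 1))" using b by (simp add: mult_left_mono)
    then show ?thesis by (simp add: algebra_simps)
  qed
  moreover have "rho / (a + rho) * Bm * y0 powr ((a + rho) / a) \<ge> 0" using rho apr Bm by simp
  moreover have "N * Bm * y0 powr (rho / a) \<le> N * Bm * N powr (rho / a)"
    using powr_mono2[of "rho/a" y0 N] rho a y0 y0N N Bm by (simp add: mult_left_mono)
  moreover have "b * c * (c - 2) \<ge> b * (c - 2)" using b c3 by (simp add: mult_left_mono)
  moreover have "b * c^2 = b * c * (c - 2) + 2 * b * c" by (simp add: algebra_simps power2_eq_square)
  moreover have "b * (c - 2) = b + \<bar>T0\<bar>" using b by (simp add: c_def field_simps)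
  moreover have "T0 \<le> \<bar>T0\<bar>" by simp
  ultimately have "(a + rho) * fbLHS a rho b p l y0 \<ge> (a + rho) * R"
    unfolding T0_def K_def using b by linarith
  hence "fbLHS a rho b p l y0 \<ge> R" using apr by simp
  then show ?thesis using y0 y0N unfolding N_def by blast
qed

lemma ystar_ex1:
  assumes lam: "lam > 0" and l: "l > 0"
  shows "\<exists>!y. 0 < y \<and> y \<le> l powr (p - 1) \<and> fbLHS a rho b p l y = fbRHS a rho b lam p l"
proof (rule ex_ex1I)
  obtain y0 where y0: "0 < y0" "y0 \<le> l powr (p-1)" "fbLHS a rho b p l y0 \<ge> fbRHS a rho b lam p l"
    using fbLHS_big[OF l] by blast
  have "fbLHS a rho b p l (l powr (p-1)) \<le> fbRHS a rho b lam p l" using fbRHS_ge[OF lam l] .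
  then obtain x where "y0 \<le> x" "x \<le> l powr (p-1)" "fbLHS a rho b p l x = fbRHS a rho b lam p l"
    using IVT2'[of "\<lambda>y. fbLHS a rho b p l y" "l powr (p-1)" "fbRHS a rho b lam p l" y0] y0 fbLHS_cont[OF y0(1)]
    by blast
  then show "\<exists>y. 0 < y \<and> y \<le> l powr (p - 1) \<and> fbLHS a rho b p l y = fbRHS a rho b lam p l"
    using y0 by (intro exI[of _ x]) auto
next
  fix y1 y2
  assume h1: "0 < y1 \<and> y1 \<le> l powr (p - 1) \<and> fbLHS a rho b p l y1 = fbRHS a rho b lam p l"
    and h2: "0 < y2 \<and> y2 \<le> l powr (p - 1) \<and> fbLHS a rho b p l y2 = fbRHS a rho b lam p l"
  show "y1 = y2"
  proof (rule ccontr)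
    assume "y1 \<noteq> y2"
    then consider "y1 < y2" | "y2 < y1" by linarith
    then show False
    proof cases
      case 1 then show False using fbLHS_strict_dec[OF _ 1, of l] h1 h2 by simp
    next
      case 2 then show False using fbLHS_strict_dec[OF _ 2, of l] h1 h2 by simp
    qed
  qed
qed

lemma ystar_props:
  assumes l: "l \<ge> b powr (1 / (p - 1))"
  shows "0 < ystar a rho b lam p l \<and> ystar a rho b lam p l \<le> l powr (p - 1)"
proof -
  have "b powr (1 / (p - 1)) > 0" using b by simp
  hence l0: "l > 0" using l by linarith
  show ?thesis
  proof (cases "0 < lam \<and> l \<ge> b powr (1 / (p - 1)) / lam")
    case True
    then show ?thesis unfolding ystar_def if_P[OF True] using theI'[OF ystar_ex1[OF _ l0]] by simp
  next
    case False
    then show ?thesis unfolding ystar_def if_not_P[OF False] using l0 by simp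
  qed
qed

lemma C6_nonneg:
  assumes m: "m \<ge> b powr (1 / (p - 1))"
  shows "C6 a rho b lam p m \<ge> 0"
proof -
  have nn: "0 \<le> a / (rho * (a + rho)) * l powr (p - 1) * b powr (- rho / a)
        * (ystar a rho b lam p l) powr (rho / a)
      - a * b / (a + rho)^2 * b powr (- ((a + rho) / a))
        * (ystar a rho b lam p l) powr ((a + rho) / a)" if l: "l \<in> {m..}" for l
  proof -
    define Y where "Y = ystar a rho b lam p l"
    define L where "L = l powr (p - 1)"
    define Bm where "Bm = b powr (- rho / a)"
    have "l \<ge> b powr (1 / (p - 1))" using l m by simp
    hence Y: "0 < Y" "Y \<le> L" using ystar_props unfolding Y_def L_def by auto
    have k1: "b * b powr (- ((a + rho) / a)) = Bm"
    proof -
      have "b * b powr (- ((a + rho) / a)) = b powr (1 + - ((a + rho) / a))"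
        using b by (simp add: powr_diff powr_minus divide_inverse)
      also have "1 + - ((a + rho) / a) = - rho / a" using a by (simp add: field_simps)
      finally show ?thesis by (simp add: Bm_def)
    qed
    have k2: "Y powr ((a + rho) / a) = Y * Y powr (rho / a)"
    proof -
      have "(a + rho) / a = 1 + rho / a" using a by (simp add: field_simps)
      then show ?thesis using Y by (simp add: powr_add)
    qed
    define P where "P = a * Bm * Y powr (rho / a) / (a + rho)"
    have P: "P \<ge> 0" using a rho b by (simp add: P_def Bm_def)
    have e1: "a / (rho * (a + rho)) * L * Bm * Y powr (rho / a) = P * (L / rho)"
      by (simp add: P_def field_simps)
    have e2: "a * b / (a + rho)^2 * b powr (- ((a + rho) / a)) * Y powr ((a + rho) / a) = P * (Y / (a + rho))"
    proof -
      have "a * b / (a + rho)^2 * b powr (- ((a + rho) / a)) * Y powr ((a + rho) / a)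
          = a / (a + rho)^2 * (b * b powr (- ((a + rho) / a))) * Y powr ((a + rho) / a)" by simp
      also have "\<dots> = a / (a + rho)^2 * Bm * (Y * Y powr (rho / a))" by (simp only: k1 k2)
      also have "\<dots> = P * (Y / (a + rho))" by (simp add: P_def power2_eq_square)
      finally show ?thesis .
    qed
    have "Y / (a + rho) \<le> L / rho"
    proof -
      have "Y / (a + rho) \<le> L / (a + rho)" using Y a rho by (simp add: divide_right_mono)
      also have "\<dots> \<le> L / rho" using Y a rho by (intro divide_left_mono) auto
      finally show ?thesis .
    qed
    hence "P * (Y / (a + rho)) \<le> P * (L / rho)" using P by (rule mult_left_mono)
    then show ?thesis using e1 e2 unfolding Y_def L_def Bm_def by simp
  qed
  show ?thesis
  proof (cases "(\<lambda>l. a / (rho * (a + rho)) * l powr (p - 1) * b powr (- rho / a)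
        * (ystar a rho b lam p l) powr (rho / a)
      - a * b / (a + rho)^2 * b powr (- ((a + rho) / a))
        * (ystar a rho b lam p l) powr ((a + rho) / a)) integrable_on {m..}")
    case True
    then show ?thesis unfolding C6_def by (rule integral_nonneg) (rule nn)
  next
    case False
    then show ?thesis unfolding C6_def by (simp add: not_integrable_integral)
  qed
qed

end

lemma rat_ids:
  fixes a rho p :: real
  assumes a: "a > 0" and rho: "rho > 0" and p0: "p \<noteq> 0" and p1: "p < 1" and D: "rho * (1 - p) - a * p > 0"
  defines "S \<equiv> a + rho" and "Dd \<equiv> rho * (1 - p) - a * p"
  defines "K5 \<equiv> (1 - p)^2 / p - (a * p + a + rho) / (p * (a + rho))"
  defines "c3 \<equiv> (a + rho - p * rho - (1 - p)^2 * (a + rho)) / (p * (a + rho))"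
  shows "K5 / S + 1 / (p * rho) + a^3 / (rho * S^2 * Dd) - (1 - p)^3 / (p * Dd) = 0"
    and "K5 / S + 1 / S - a^2 / (S^2 * Dd) + (1 - p)^2 / Dd = 0"
    and "- 1 / S + a^3 / (rho * S^2 * Dd) + 1 / (p * rho) - c3 / S - (1 - p)^3 / (p * Dd) = 0"
    and "(1 - p)^2 / Dd - a^2 / (S^2 * Dd) - c3 / S = 0"
proof -
  have S: "S \<noteq> 0" using a rho by (simp add: S_def)
  have DD: "Dd \<noteq> 0" using D by (simp add: Dd_def)
  have K5: "K5 = (1 - p)^2 / p - (a * p + S) / (p * S)" by (simp add: K5_def S_def add.assoc)
  have c3: "c3 = (S - p * rho - (1 - p)^2 * S) / (p * S)" by (simp add: c3_def S_def)
  have r: "rho = S - a" by (simp add: S_def)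
  have Dr: "Dd = (S - a) * (1 - p) - a * p" by (simp add: Dd_def S_def)
  have rr: "rho \<noteq> 0" using rho by simp
  show "K5 / S + 1 / (p * rho) + a^3 / (rho * S^2 * Dd) - (1 - p)^3 / (p * Dd) = 0"
    unfolding K5 using S DD p0 rr
    apply (simp add: field_simps)
    apply (simp add: Dr r algebra_simps power2_eq_square power3_eq_cube)
    done
  show "K5 / S + 1 / S - a^2 / (S^2 * Dd) + (1 - p)^2 / Dd = 0"
    unfolding K5 using S DD p0 rr
    apply (simp add: field_simps)
    apply (simp add: Dr r algebra_simps power2_eq_square power3_eq_cube)
    done
  show "- 1 / S + a^3 / (rho * S^2 * Dd) + 1 / (p * rho) - c3 / S - (1 - p)^3 / (p * Dd) = 0"
    unfolding c3 using S DD p0 rr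
    apply (simp add: field_simps)
    apply (simp add: Dr r algebra_simps power2_eq_square power3_eq_cube)
    done
  show "(1 - p)^2 / Dd - a^2 / (S^2 * Dd) - c3 / S = 0"
    unfolding c3 using S DD p0 rr
    apply (simp add: field_simps)
    apply (simp add: Dr r algebra_simps power2_eq_square power3_eq_cube)
    done
qed

locale vh =
  fixes a rho b lam p k z m :: real
  assumes a: "a > 0" and rho: "rho > 0" and b: "b > 0" and lam0: "0 \<le> lam" and lam1: "lam \<le> 1"
    and p1: "p < 1" and p0: "p \<noteq> 0" and Dpos: "rho * (1 - p) - a * p > 0"
    and k0: "0 < k" and k1: "k \<le> 1" and z: "z \<ge> 0" and m: "m \<ge> b powr (1 / (p - 1))"
begin

definition "C6v = C6 a rho b lam p m"
definition "Av = Acoef a rho b lam p m"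
definition "Bv = Bcoef a rho b p m"
definition "C3r = C3 a rho b lam p m - rho / a * C6v"
definition "C5r = C5 a rho b lam p m - rho / a * C6v"

definition "Cm y = 1 / b * (rho / a * C6v) * y + b powr (rho / a) * C6v * y powr (- rho / a) + z * psiC k b y"
definition "Cm' y = rho / a * C6v / b - rho / a * C6v * b powr (rho / a) * y powr (- rho / a - 1)
   + z * (1 - b powr (1 - k) * y powr (k - 1))"
definition "P1 y = (Av / b - lam * m / (a + rho)) * y + b powr (rho / a) * (a / rho * Av) * y powr (- rho / a)
   + (lam * m) powr p / (p * rho) + lam * m / (a + rho) * y * ln (y / b)"
definition "P1' y = Av / b - lam * m / (a + rho) - Av * b powr (rho / a) * y powr (- rho / a - 1)
   + lam * m / (a + rho) * (ln (y / b) + 1)"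
definition "P2 y = C3r / b * y - a / rho * Bv * b powr (rho / a) * y powr (- rho / a)
   + (1 - p)^3 / (p * (rho * (1 - p) - a * p)) * y powr (p / (p - 1))"
definition "P2' y = C3r / b + Bv * b powr (rho / a) * y powr (- rho / a - 1)
   - (1 - p)^2 / (rho * (1 - p) - a * p) * y powr (1 / (p - 1))"
definition "P3 y = C5r / b * y + m powr p / (p * rho) + m / (a + rho) * y * ln (y / b)"
definition "P3' y = C5r / b + m / (a + rho) * (ln (y / b) + 1)"

lemma nz: "a \<noteq> 0" "b \<noteq> 0" "rho \<noteq> 0" "p \<noteq> 0" "a + rho \<noteq> 0" "p - 1 \<noteq> 0"
  "rho * (1 - p) - a * p \<noteq> 0"
  using a b rho p0 p1 Dpos by auto

lemma m0: "m > 0"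
proof -
  have "b powr (1 / (p - 1)) > 0" using b by simp
  then show ?thesis using m by linarith
qed

lemma Cm_deriv: "y > 0 \<Longrightarrow> (Cm has_real_derivative Cm' y) (at y)"
proof -
  assume y: "y > 0"
  show ?thesis
    unfolding Cm_def Cm'_def psiC_def
    apply (rule derivative_eq_intros refl | simp add: y b nz)+
    using k0 a b by (simp add: field_simps)
qed

lemma P1_deriv: "y > 0 \<Longrightarrow> (P1 has_real_derivative P1' y) (at y)"
proof -
  assume y: "y > 0"
  define S where "S = a + rho"
  have S: "S \<noteq> 0" using a rho by (simp add: S_def)
  show ?thesis
    unfolding P1_def P1'_def
    apply (rule derivative_eq_intros refl | simp add: y b nz)+
    apply (simp only: flip: S_def)
    using a rho b S y by (simp add: field_simps)
qed

lemma P2_deriv: "y > 0 \<Longrightarrow> (P2 has_real_derivative P2' y) (at y)"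
proof -
  assume y: "y > 0"
  have e: "p / (p - 1) - 1 = 1 / (p - 1)" using p1 by (simp add: field_simps)
  have D: "rho * (1 - p) - a * p \<noteq> 0" using Dpos by simp
  have pm: "p - 1 \<noteq> 0" using p1 by simp
  define Dd where "Dd = rho * (1 - p) - a * p"
  have DD: "Dd \<noteq> 0" using D by (simp add: Dd_def)
  show ?thesis
  unfolding P2_def P2'_def
  apply (rule derivative_eq_intros refl | simp add: y nz)+
  apply (simp only: e flip: Dd_def)
  using a rho b p0 p1 DD pm by (simp add: field_simps power3_eq_cube power2_eq_square)
qed

lemma P3_deriv: "y > 0 \<Longrightarrow> (P3 has_real_derivative P3' y) (at y)"
proof -
  assume y: "y > 0"
  define S where "S = a + rho"
  have S: "S \<noteq> 0" using a rho by (simp add: S_def)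
  show ?thesis
    unfolding P3_def P3'_def
    apply (rule derivative_eq_intros refl | simp add: y b nz)+
    apply (simp only: flip: S_def)
    using a rho b S y by (simp add: field_simps)
qed

lemma vhat_e1: "1 / b * C1 a rho b lam p m * y + b powr (rho / a) * C2 a rho b lam p m * y powr (- rho / a)
        + (lam * m) powr p / (p * rho) + lam * m / (a + rho) * y * ln (y / b) + z * psiC k b y = Cm y + P1 y"
proof -
  define S where "S = a + rho"
  have S: "S \<noteq> 0" using a rho by (simp add: S_def)
  show ?thesis
    unfolding Cm_def P1_def C1_def C2_def Av_def C6v_def
    apply (simp only: flip: S_def)
    using nz S by (simp add: field_simps)
qed

lemma vhat_e2: "1 / b * C3 a rho b lam p m * y + b powr (rho / a) * C4 a rho b lam p m * y powr (- rho / a)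
        + (1 - p)^3 / (p * (rho * (1 - p) - a * p)) * y powr (p / (p - 1)) + z * psiC k b y = Cm y + P2 y"
  unfolding Cm_def P2_def C4_def C3r_def Bv_def C6v_def using nz by (simp add: field_simps)

lemma vhat_e3: "1 / b * C5 a rho b lam p m * y + b powr (rho / a) * C6 a rho b lam p m * y powr (- rho / a)
        + m powr p / (p * rho) + m / (a + rho) * y * ln (y / b) + z * psiC k b y = Cm y + P3 y"
proof -
  define S where "S = a + rho"
  have S: "S \<noteq> 0" using a rho by (simp add: S_def)
  show ?thesis
    unfolding Cm_def P3_def C5r_def C6v_def
    apply (simp only: flip: S_def)
    using nz S by (simp add: field_simps)
qed

lemma vhat_eq: "vhat a rho b lam p k y z m =
   (if 0 < lam \<and> (lam * m) powr (p - 1) < y then Cm y + P1 y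
    else if m powr (p - 1) < y then Cm y + P2 y else Cm y + P3 y)"
  unfolding vhat_def vhat_e1 vhat_e2 vhat_e3 ..


definition "M0 = m powr (p - 1)"
definition "L0 = (lam * m) powr (p - 1)"
definition "lu = ln (b * m powr (1 - p))"
definition "Tc \<longleftrightarrow> 0 < lam \<and> b powr (1 / (p - 1)) / lam \<le> m"
definition "K5 = (1 - p)^2 / p - (a * p + a + rho) / (p * (a + rho))"
definition "c3 = (a + rho - p * rho - (1 - p)^2 * (a + rho)) / (p * (a + rho))"
definition "ex = (a * p - (1 - p) * rho) / a"
definition "Bm = b powr (- rho / a)"

lemma pw:
  assumes n: "n > 0"
  shows "n powr p = n * n powr (p - 1)"
    and "(n powr (p - 1)) powr (p / (p - 1)) = n * n powr (p - 1)"
    and "(n powr (p - 1)) powr (1 / (p - 1)) = n"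
    and "ln (n powr (p - 1) / b) = - ln (b * n powr (1 - p))"
    and "n powr ex * (n powr (p - 1)) powr (- rho / a) = n * n powr (p - 1)"
proof -
  have pm: "p - 1 \<noteq> 0" using p1 by simp
  have "n powr (1 + (p - 1)) = n powr 1 * n powr (p - 1)" by (rule powr_add)
  then show 1: "n powr p = n * n powr (p - 1)" using n by simp
  show "(n powr (p - 1)) powr (p / (p - 1)) = n * n powr (p - 1)"
    using pm 1 by (simp add: powr_powr)
  show "(n powr (p - 1)) powr (1 / (p - 1)) = n"
    using pm n by (simp add: powr_powr)
  show "ln (n powr (p - 1) / b) = - ln (b * n powr (1 - p))"
    using n b by (simp add: ln_div ln_mult ln_powr algebra_simps)
  have "ex + (p - 1) * (- rho / a) = p" using a by (simp add: ex_def field_simps)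
  then show "n powr ex * (n powr (p - 1)) powr (- rho / a) = n * n powr (p - 1)"
    using 1 by (simp add: powr_powr powr_add[symmetric])
qed

lemma Bm_inv: "b powr (rho / a) * Bm = 1"
  using b by (simp add: Bm_def powr_add[symmetric])

lemma Bv_eq: "Bv = a^2 * Bm / ((a + rho)^2 * (rho * (1 - p) - a * p)) * m powr ex"
  by (simp add: Bv_def Bcoef_def Bm_def ex_def)

lemma Av_eq: "Av = (lam powr ex - 1) * Bv"
  by (simp add: Av_def Acoef_def Bv_def Bcoef_def ex_def)

lemma QM: "Bv * b powr (rho / a) * M0 powr (- rho / a) = a^2 / ((a + rho)^2 * (rho * (1 - p) - a * p)) * (m * M0)"
proof -
  have "Bv * b powr (rho / a) * M0 powr (- rho / a)
      = a^2 / ((a + rho)^2 * (rho * (1 - p) - a * p)) * (b powr (rho / a) * Bm) * (m powr ex * M0 powr (- rho / a))"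
    by (simp add: Bv_eq)
  also have "\<dots> = a^2 / ((a + rho)^2 * (rho * (1 - p) - a * p)) * (m * M0)"
    unfolding Bm_inv M0_def pw(5)[OF m0] by simp
  finally show ?thesis .
qed

lemma AL:
  assumes lam: "lam > 0"
  shows "Av * b powr (rho / a) * L0 powr (- rho / a)
     = a^2 / ((a + rho)^2 * (rho * (1 - p) - a * p)) * ((lam * m) * L0) - Bv * b powr (rho / a) * L0 powr (- rho / a)"
proof -
  have n: "lam * m > 0" using lam m0 by simp
  have "lam powr ex * Bv * b powr (rho / a) * L0 powr (- rho / a)
      = a^2 / ((a + rho)^2 * (rho * (1 - p) - a * p)) * (b powr (rho / a) * Bm) * ((lam powr ex * m powr ex) * L0 powr (- rho / a))"
    by (simp add: Bv_eq)
  also have "\<dots> = a^2 / ((a + rho)^2 * (rho * (1 - p) - a * p)) * ((lam * m) * L0)"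
    unfolding Bm_inv L0_def powr_mult[symmetric] pw(5)[OF n] by simp
  finally show ?thesis unfolding Av_eq by (simp add: algebra_simps)
qed

lemma powr_m1: "y > 0 \<Longrightarrow> y powr (- rho / a - 1) = y powr (- rho / a) / y"
  by (simp add: powr_diff)

lemma M0_pos: "M0 > 0" using m0 by (simp add: M0_def)

lemma M0_le_b: "M0 \<le> b"
proof -
  have "M0 \<le> (b powr (1 / (p - 1))) powr (p - 1)"
    unfolding M0_def using m p1 b by (intro powr_mono2') auto
  also have "\<dots> = b" using p1 b by (simp add: powr_powr)
  finally show ?thesis .
qed

lemma C53: "C5r - C3r = b * m / (a + rho) * (K5 + lu)"
proof -
  define S where "S = a + rho"
  have S: "S \<noteq> 0" using a rho by (simp add: S_def)
  show ?thesis
  proof (cases Tc)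
    case True
    then have T: "0 < lam \<and> b powr (1 / (p - 1)) / lam \<le> m" by (simp add: Tc_def)
    show ?thesis
      unfolding C5r_def C3r_def C5_def C3_def if_P[OF T] K5_def lu_def
      apply (simp only: flip: S_def)
      using S nz by (simp add: field_simps power2_eq_square; simp add: S_def algebra_simps)
  next
    case False
    then have T: "\<not> (0 < lam \<and> b powr (1 / (p - 1)) / lam \<le> m)" by (simp add: Tc_def)
    show ?thesis
      unfolding C5r_def C3r_def C5_def C3_def if_not_P[OF T] K5_def lu_def
      by (simp add: algebra_simps)
  qed
qed

lemma C3r_T: "Tc \<Longrightarrow> C3r = Av + b * m / (a + rho) * ((a + rho - p * rho - (1 - p)^2 * (a + rho)) * lam / (p * (a + rho))
              - lam * ln (b * (lam * m) powr (1 - p)))"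
proof -
  assume "Tc"
  then have T: "0 < lam \<and> b powr (1 / (p - 1)) / lam \<le> m" by (simp add: Tc_def)
  show ?thesis unfolding C3r_def C3_def if_P[OF T] Av_def C6v_def by simp
qed

lemma C3r_nT: "\<not> Tc \<Longrightarrow> C3r = - Bv + (1 - p)^2 * b powr (p / (p - 1)) / (rho * (1 - p) - a * p)"
proof -
  assume "\<not> Tc"
  then have T: "\<not> (0 < lam \<and> b powr (1 / (p - 1)) / lam \<le> m)" by (simp add: Tc_def)
  show ?thesis unfolding C3r_def C3_def if_not_P[OF T] Bv_def C6v_def by simp
qed

lemma C5r_T: "Tc \<Longrightarrow> lam = 1 \<Longrightarrow> C5r = - b * m / (a + rho)"
proof -
  assume T0: "Tc" and l1: "lam = 1"
  from T0 have T: "0 < lam \<and> b powr (1 / (p - 1)) / lam \<le> m" unfolding Tc_def .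
  show ?thesis unfolding C5r_def C5_def if_P[OF T] Av_def C6v_def Acoef_def using l1 by simp
qed

lemma match_M_val: "P3 M0 = P2 M0"
proof -
  define S where "S = a + rho"
  define Dd where "Dd = rho * (1 - p) - a * p"
  have S: "S \<noteq> 0" using a rho by (simp add: S_def)
  have DD: "Dd \<noteq> 0" using Dpos by (simp add: Dd_def)
  have C5: "C5r = C3r + b * m / (a + rho) * (K5 + lu)" using C53 by simp
  have bp: "b powr (rho / a) \<noteq> 0" "M0 powr (- rho / a) \<noteq> 0" using b M0_pos by auto
  have Bv: "Bv = a^2 / ((a + rho)^2 * (rho * (1 - p) - a * p)) * (m * M0) / (b powr (rho / a) * M0 powr (- rho / a))"
  proof -
    have Y: "b powr (rho / a) * M0 powr (- rho / a) \<noteq> 0" using bp by simp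
    have "Bv = Bv * (b powr (rho / a) * M0 powr (- rho / a)) / (b powr (rho / a) * M0 powr (- rho / a))"
      using Y by simp
    also have "\<dots> = a^2 / ((a + rho)^2 * (rho * (1 - p) - a * p)) * (m * M0) / (b powr (rho / a) * M0 powr (- rho / a))"
      using QM by (simp add: mult.assoc)
    finally show ?thesis .
  qed
  have "P3 M0 - P2 M0 = m * M0 * (K5 / S + 1 / (p * rho) + a^3 / (rho * S^2 * Dd) - (1 - p)^3 / (p * Dd))"
    unfolding P3_def P2_def C5 pw(1)[OF m0] pw(2)[OF m0, folded M0_def] M0_def[symmetric]
      pw(4)[OF m0, folded M0_def lu_def] Bv
    apply (simp only: flip: S_def Dd_def M0_def lu_def)
    using S DD nz bp M0_pos m0 by (simp add: field_simps power2_eq_square power3_eq_cube)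
  also have "\<dots> = 0" using rat_ids(1)[OF a rho p0 p1 Dpos] unfolding K5_def S_def Dd_def by simp
  finally show ?thesis by simp
qed


lemma match_M_der: "P3' M0 = P2' M0"
proof -
  define S where "S = a + rho"
  define Dd where "Dd = rho * (1 - p) - a * p"
  have S: "S \<noteq> 0" using a rho by (simp add: S_def)
  have DD: "Dd \<noteq> 0" using Dpos by (simp add: Dd_def)
  have C5: "C5r = C3r + b * m / (a + rho) * (K5 + lu)" using C53 by simp
  have bp: "b powr (rho / a) \<noteq> 0" "M0 powr (- rho / a) \<noteq> 0" using b M0_pos by auto
  have Bv: "Bv = a^2 / ((a + rho)^2 * (rho * (1 - p) - a * p)) * (m * M0) / (b powr (rho / a) * M0 powr (- rho / a))"
  proof -
    have Y: "b powr (rho / a) * M0 powr (- rho / a) \<noteq> 0" using bp by simp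
    have "Bv = Bv * (b powr (rho / a) * M0 powr (- rho / a)) / (b powr (rho / a) * M0 powr (- rho / a))"
      using Y by simp
    also have "\<dots> = a^2 / ((a + rho)^2 * (rho * (1 - p) - a * p)) * (m * M0) / (b powr (rho / a) * M0 powr (- rho / a))"
      using QM by (simp add: mult.assoc)
    finally show ?thesis .
  qed
  have "P3' M0 - P2' M0 = m * (K5 / S + 1 / S - a^2 / (S^2 * Dd) + (1 - p)^2 / Dd)"
    unfolding P3'_def P2'_def C5 powr_m1[OF M0_pos] pw(3)[OF m0, folded M0_def]
      pw(4)[OF m0, folded M0_def lu_def] Bv
    apply (simp only: flip: S_def Dd_def M0_def lu_def)
    using S DD nz bp M0_pos m0 by (simp add: field_simps power2_eq_square power3_eq_cube)
  also have "\<dots> = 0" using rat_ids(2)[OF a rho p0 p1 Dpos] unfolding K5_def S_def Dd_def by simp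
  finally show ?thesis by simp
qed

lemma L0_pos: "lam > 0 \<Longrightarrow> L0 > 0" using m0 by (simp add: L0_def)

lemma Av_subst:
  assumes lam: "lam > 0"
  shows "Av = (a^2 / ((a + rho)^2 * (rho * (1 - p) - a * p)) * ((lam * m) * L0) - Bv * b powr (rho / a) * L0 powr (- rho / a))
              / (b powr (rho / a) * L0 powr (- rho / a))"
proof -
  have Y: "b powr (rho / a) * L0 powr (- rho / a) \<noteq> 0" using b L0_pos[OF lam] by simp
  have "Av = Av * (b powr (rho / a) * L0 powr (- rho / a)) / (b powr (rho / a) * L0 powr (- rho / a))"
    using Y by simp
  also have "\<dots> = (a^2 / ((a + rho)^2 * (rho * (1 - p) - a * p)) * ((lam * m) * L0) - Bv * b powr (rho / a) * L0 powr (- rho / a))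
              / (b powr (rho / a) * L0 powr (- rho / a))"
    using AL[OF lam] by (simp add: mult.assoc)
  finally show ?thesis .
qed

lemma match_L_val:
  assumes T: "Tc"
  shows "P2 L0 = P1 L0"
proof -
  have lam: "lam > 0" using T by (simp add: Tc_def)
  have n: "lam * m > 0" using lam m0 by simp
  define S where "S = a + rho"
  define Dd where "Dd = rho * (1 - p) - a * p"
  define v where "v = ln (b * (lam * m) powr (1 - p))"
  have S: "S \<noteq> 0" using a rho by (simp add: S_def)
  have DD: "Dd \<noteq> 0" using Dpos by (simp add: Dd_def)
  have bp: "b powr (rho / a) \<noteq> 0" "L0 powr (- rho / a) \<noteq> 0" using b L0_pos[OF lam] by auto
  have "P1 L0 - P2 L0 = (lam * m) * L0 * (- 1 / S + a^3 / (rho * S^2 * Dd) + 1 / (p * rho) - c3 / S - (1 - p)^3 / (p * Dd))"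
    unfolding P1_def P2_def C3r_T[OF T] pw(1)[OF n] pw(2)[OF n, folded L0_def] L0_def[symmetric]
      pw(4)[OF n, folded L0_def v_def] Av_subst[OF lam] c3_def
    apply (simp only: flip: S_def Dd_def L0_def v_def)
    using S DD nz bp L0_pos[OF lam] m0 lam by (simp add: field_simps power2_eq_square power3_eq_cube)
  also have "\<dots> = 0" using rat_ids(3)[OF a rho p0 p1 Dpos] unfolding c3_def S_def Dd_def by simp
  finally show ?thesis by simp
qed

lemma match_L_der:
  assumes T: "Tc"
  shows "P2' L0 = P1' L0"
proof -
  have lam: "lam > 0" using T by (simp add: Tc_def)
  have n: "lam * m > 0" using lam m0 by simp
  define S where "S = a + rho"
  define Dd where "Dd = rho * (1 - p) - a * p"
  define v where "v = ln (b * (lam * m) powr (1 - p))"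
  have S: "S \<noteq> 0" using a rho by (simp add: S_def)
  have DD: "Dd \<noteq> 0" using Dpos by (simp add: Dd_def)
  have bp: "b powr (rho / a) \<noteq> 0" "L0 powr (- rho / a) \<noteq> 0" using b L0_pos[OF lam] by auto
  have "P1' L0 - P2' L0 = (lam * m) * ((1 - p)^2 / Dd - a^2 / (S^2 * Dd) - c3 / S)"
    unfolding P1'_def P2'_def C3r_T[OF T] powr_m1[OF L0_pos[OF lam]] pw(3)[OF n, folded L0_def]
      pw(4)[OF n, folded L0_def v_def] Av_subst[OF lam] c3_def
    apply (simp only: flip: S_def Dd_def L0_def v_def)
    using S DD nz bp L0_pos[OF lam] m0 lam by (simp add: field_simps power2_eq_square power3_eq_cube)
  also have "\<dots> = 0" using rat_ids(4)[OF a rho p0 p1 Dpos] unfolding c3_def S_def Dd_def by simp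
  finally show ?thesis by simp
qed

lemma Av_1: "lam = 1 \<Longrightarrow> Av = 0"
  using Av_eq by simp

lemma match_1:
  assumes T: "Tc" and l1: "lam = 1"
  shows "P3 M0 = P1 M0" "P3' M0 = P1' M0"
proof -
  define S where "S = a + rho"
  have S: "S \<noteq> 0" using a rho by (simp add: S_def)
  show "P3 M0 = P1 M0"
    unfolding P3_def P1_def C5r_T[OF T l1] Av_1[OF l1]
    apply (simp only: flip: S_def)
    using l1 nz S by (simp add: field_simps)
  show "P3' M0 = P1' M0"
    unfolding P3'_def P1'_def C5r_T[OF T l1] Av_1[OF l1]
    apply (simp only: flip: S_def)
    using l1 nz S by (simp add: field_simps)
qed

lemma bpow_m1: "b powr (- rho / a - 1) = 1 / (b * b powr (rho / a))"
proof -
  have "- rho / a - 1 = - (rho / a + 1)" by simp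
  then have "b powr (- rho / a - 1) = inverse (b powr (rho / a + 1))" by (simp only: powr_minus)
  also have "b powr (rho / a + 1) = b powr (rho / a) * b" using b by (simp add: powr_add)
  finally show ?thesis by (simp add: field_simps)
qed

lemma P1'_b: "P1' b = 0"
proof -
  have "b powr (- rho / a - 1) = b powr (- rho / a) / b" using b by (simp add: powr_diff)
  moreover have "b powr (rho / a) * b powr (- rho / a) = 1" using b by (simp add: powr_add[symmetric])
  have "b powr (rho / a) \<noteq> 0" using b by simp
  define S where "S = a + rho"
  have S: "S \<noteq> 0" using a rho by (simp add: S_def)
  show ?thesis unfolding P1'_def bpow_m1
    apply (simp only: flip: S_def)
    using b S \<open>b powr (rho / a) \<noteq> 0\<close> by (simp add: field_simps)
qed

lemma Cm'_b: "Cm' b = 0"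
proof -
  have "b powr (- rho / a - 1) = b powr (- rho / a) / b" using b by (simp add: powr_diff)
  moreover have "b powr (rho / a) * b powr (- rho / a) = 1" using b by (simp add: powr_add[symmetric])
  moreover have "b powr (1 - k) * b powr (k - 1) = 1" using b by (simp add: powr_add[symmetric])
  moreover have "b powr (rho / a) \<noteq> 0" using b by simp
  ultimately show ?thesis unfolding Cm'_def bpow_m1 using b by (simp add: field_simps)
qed

lemma P2'_b: "\<not> Tc \<Longrightarrow> P2' b = 0"
proof -
  assume T: "\<not> Tc"
  have "b powr (- rho / a - 1) = b powr (- rho / a) / b" using b by (simp add: powr_diff)
  moreover have "b powr (rho / a) * b powr (- rho / a) = 1" using b by (simp add: powr_add[symmetric])
  moreover have "b powr (p / (p - 1)) = b * b powr (1 / (p - 1))"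
  proof -
    have "p / (p - 1) = 1 + 1 / (p - 1)" using p1 by (simp add: field_simps)
    then show ?thesis using b by (simp add: powr_add)
  qed
  moreover have "b powr (rho / a) \<noteq> 0" using b by simp
  ultimately have facts: "b powr (p / (p - 1)) = b * b powr (1 / (p - 1))" "b powr (rho / a) \<noteq> 0" by auto
  define Dd where "Dd = rho * (1 - p) - a * p"
  have DD: "Dd \<noteq> 0" using Dpos by (simp add: Dd_def)
  show ?thesis unfolding P2'_def C3r_nT[OF T] bpow_m1 facts(1)
    apply (simp only: flip: Dd_def)
    using b nz DD facts(2) by (simp add: field_simps)
qed

end

context vh
begin


lemma ra: "rho / a > 0" using a rho by simp

lemma e: "- rho / a - 1 \<le> 0" using ra by (simp add: neg_divide_le_eq)

lemma C6v_nonneg: "C6v \<ge> 0"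
  unfolding C6v_def using C6_nonneg[OF a rho b lam0 lam1 p1 p0 Dpos m] .

lemma Cm'_mono:
  assumes y1: "0 < y1" and y12: "y1 \<le> y2"
  shows "Cm' y1 \<le> Cm' y2"
proof -
  have h1: "y2 powr (- rho / a - 1) \<le> y1 powr (- rho / a - 1)"
    by (rule powr_mono2'[OF e y1 y12])
  have h2: "y2 powr (k - 1) \<le> y1 powr (k - 1)"
    using k1 y1 y12 by (intro powr_mono2') auto
  have c: "rho / a * C6v * b powr (rho / a) \<ge> 0"
    using C6v_nonneg a rho by simp
  have "rho / a * C6v * b powr (rho / a) * y2 powr (- rho / a - 1)
      \<le> rho / a * C6v * b powr (rho / a) * y1 powr (- rho / a - 1)"
    using mult_left_mono[OF h1 c] .
  moreover have "z * (b powr (1 - k) * y2 powr (k - 1)) \<le> z * (b powr (1 - k) * y1 powr (k - 1))"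
    using h2 z b by (intro mult_left_mono) auto
  ultimately show ?thesis unfolding Cm'_def by (simp add: algebra_simps)
qed

lemma Av_nonneg: "lam > 0 \<Longrightarrow> Av \<ge> 0"
proof -
  assume lam: "lam > 0"
  have ex: "ex \<le> 0" unfolding ex_def using a Dpos by (simp add: divide_nonpos_pos algebra_simps)
  have "1 powr ex \<le> lam powr ex" using ex lam lam1 by (intro powr_mono2') auto
  hence l: "lam powr ex - 1 \<ge> 0" by simp
  have "Bv \<ge> 0" unfolding Bv_def Bcoef_def using a rho b Dpos by (intro mult_nonneg_nonneg) auto
  then show ?thesis using Av_eq l by simp
qed

lemma P1'_smono:
  assumes lam: "lam > 0" and y1: "0 < y1" and y12: "y1 < y2"
  shows "P1' y1 < P1' y2"
proof -
  have h1: "y2 powr (- rho / a - 1) \<le> y1 powr (- rho / a - 1)"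
    by (rule powr_mono2'[OF e y1 less_imp_le[OF y12]])
  have c: "Av * b powr (rho / a) \<ge> 0" using Av_nonneg[OF lam] by simp
  have A: "Av * b powr (rho / a) * y2 powr (- rho / a - 1)
      \<le> Av * b powr (rho / a) * y1 powr (- rho / a - 1)" using mult_left_mono[OF h1 c] .
  have "ln (y1 / b) < ln (y2 / b)" using y1 y12 b by (simp add: divide_strict_right_mono)
  moreover have "lam * m / (a + rho) > 0" using lam m0 a rho by simp
  ultimately have B: "lam * m / (a + rho) * (ln (y1 / b) + 1) < lam * m / (a + rho) * (ln (y2 / b) + 1)"
    by (intro mult_strict_left_mono) auto
  show ?thesis unfolding P1'_def using A B by simp
qed

lemma P3'_smono:
  assumes y1: "0 < y1" and y12: "y1 < y2"
  shows "P3' y1 < P3' y2"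
proof -
  have "ln (y1 / b) < ln (y2 / b)" using y1 y12 b by (simp add: divide_strict_right_mono)
  moreover have "m / (a + rho) > 0" using m0 a rho by simp
  ultimately have "m / (a + rho) * (ln (y1 / b) + 1) < m / (a + rho) * (ln (y2 / b) + 1)"
    by (intro mult_strict_left_mono) auto
  then show ?thesis unfolding P3'_def by simp
qed


definition "e2 = 1 / (p - 1) + rho / a + 1"
definition "P2d x = x powr (- rho / a - 2) * ((1 - p) / (rho * (1 - p) - a * p) * x powr e2
     - (rho / a + 1) * Bv * b powr (rho / a))"

lemma P2'_deriv: "x > 0 \<Longrightarrow> (P2' has_real_derivative P2d x) (at x)"
proof -
  assume x: "x > 0"
  have f1: "x powr (- rho / a - 1 - 1) = x powr (- rho / a - 2)" by (simp add: algebra_simps)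
  have f2: "x powr (1 / (p - 1) - 1) = x powr (- rho / a - 2) * x powr e2"
  proof -
    have eq: "1 / (p - 1) - 1 = (- rho / a - 2) + e2" by (simp add: e2_def)
    have "x powr (1 / (p - 1) - 1) = x powr ((- rho / a - 2) + e2)" by (simp only: eq)
    also have "\<dots> = x powr (- rho / a - 2) * x powr e2" by (rule powr_add)
    finally show ?thesis .
  qed
  define Dd where "Dd = rho * (1 - p) - a * p"
  have DD: "Dd \<noteq> 0" using Dpos by (simp add: Dd_def)
  define X where "X = x powr (- rho / a - 2)"
  define E where "E = x powr e2"
  define Br where "Br = b powr (rho / a)"
  have eqa: "- 2 - rho / a = - rho / a - 2" by simp
  have fa: "x powr (- 2 - rho / a) = X" unfolding X_def by (simp only: eqa)
  have fb: "x powr (- (rho / a) - 2) = X" by (simp add: X_def)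
  have fc: "x powr (- rho / a - 2) = X" by (simp add: X_def)
  have f2X: "x powr (1 / (p - 1) - 1) = X * E" using f2 by (simp add: X_def E_def)
  show ?thesis
    unfolding P2'_def P2d_def
    apply (rule derivative_eq_intros refl | simp add: x fa fb fc f2X)+
    apply (simp only: flip: Dd_def E_def Br_def)
    using nz DD x by (simp add: field_simps power2_eq_square)
qed

lemma e2_pos: "e2 > 0"
proof -
  have "(rho / a + 1) * (1 - p) > 1"
  proof -
    have "(rho / a + 1) * (1 - p) - 1 = (rho * (1 - p) - a * p) / a" using a by (simp add: field_simps)
    moreover have "(rho * (1 - p) - a * p) / a > 0" using Dpos a by simp
    ultimately show ?thesis by linarith
  qed
  hence "rho / a + 1 > 1 / (1 - p)" using p1 by (simp add: field_simps)
  moreover have "1 / (p - 1) = - (1 / (1 - p))" unfolding minus_divide_right minus_diff_eq ..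
  ultimately show ?thesis unfolding e2_def by linarith
qed

lemma P2d_pos:
  assumes x: "x \<ge> M0"
  shows "P2d x > 0"
proof -
  have x0: "x > 0" using x M0_pos by simp
  have h1: "x powr e2 \<ge> M0 powr e2" using x M0_pos e2_pos by (intro powr_mono2) auto
  have "(p - 1) * e2 = ex" unfolding e2_def ex_def using a p1 by (simp add: field_simps)
  hence h2: "M0 powr e2 = m powr ex" unfolding M0_def by (simp add: powr_powr)
  have h3: "(rho / a + 1) * Bv * b powr (rho / a) = a / ((a + rho) * (rho * (1 - p) - a * p)) * m powr ex"
  proof -
    have "(rho / a + 1) * Bv * b powr (rho / a)
        = (rho / a + 1) * (a^2 / ((a + rho)^2 * (rho * (1 - p) - a * p))) * (b powr (rho / a) * Bm) * m powr ex"
      by (simp add: Bv_eq)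
    also have "\<dots> = a / ((a + rho) * (rho * (1 - p) - a * p)) * m powr ex"
    proof -
      have g: "\<And>S Dd. S \<noteq> 0 \<Longrightarrow> Dd \<noteq> 0 \<Longrightarrow> S / a * (a^2 / (S^2 * Dd)) = a / (S * Dd)"
        using nz by (simp add: field_simps power2_eq_square)
      have "rho / a + 1 = (a + rho) / a" using nz by (simp add: field_simps)
      then show ?thesis unfolding Bm_inv using g[of "a + rho" "rho * (1 - p) - a * p"] nz by simp
    qed
    finally show ?thesis .
  qed
  have h4: "(1 - p) / (rho * (1 - p) - a * p) - a / ((a + rho) * (rho * (1 - p) - a * p)) = 1 / (a + rho)"
  proof -
    define S where "S = a + rho"
    define Dd where "Dd = rho * (1 - p) - a * p"
    have S: "S \<noteq> 0" using a rho by (simp add: S_def)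
    have DD: "Dd \<noteq> 0" using Dpos by (simp add: Dd_def)
    have eq: "(1 - p) * S - a = Dd" by (simp add: S_def Dd_def algebra_simps)
    have "(1 - p) / Dd - a / (S * Dd) = ((1 - p) * S - a) / (S * Dd)" using S DD by (simp add: field_simps)
    also have "\<dots> = Dd / (S * Dd)" by (simp only: eq)
    also have "\<dots> = 1 / S" using DD by simp
    finally have "(1 - p) / Dd - a / (S * Dd) = 1 / S" .
    then show ?thesis by (simp add: S_def Dd_def)
  qed
  have Dp: "(1 - p) / (rho * (1 - p) - a * p) \<ge> 0" using Dpos p1 by simp
  have "m powr ex / (a + rho) = (1 - p) / (rho * (1 - p) - a * p) * m powr ex - a / ((a + rho) * (rho * (1 - p) - a * p)) * m powr ex"
  proof -
    have "((1 - p) / (rho * (1 - p) - a * p) - a / ((a + rho) * (rho * (1 - p) - a * p))) * m powr ex = 1 / (a + rho) * m powr ex"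
      using h4 by simp
    then show ?thesis by (simp add: left_diff_distrib)
  qed
  also have "\<dots> \<le> (1 - p) / (rho * (1 - p) - a * p) * x powr e2 - (rho / a + 1) * Bv * b powr (rho / a)"
    unfolding h3 using mult_left_mono[OF h1 Dp] h2 by simp
  finally have "(1 - p) / (rho * (1 - p) - a * p) * x powr e2 - (rho / a + 1) * Bv * b powr (rho / a) > 0"
    using m0 a rho by (smt (verit) divide_pos_pos powr_gt_zero)
  then show ?thesis unfolding P2d_def using x0 by simp
qed

lemma P2'_smono:
  assumes y1: "M0 \<le> y1" and y12: "y1 < y2"
  shows "P2' y1 < P2' y2"
proof (rule DERIV_pos_imp_increasing[OF y12])
  fix x assume "y1 \<le> x" "x \<le> y2"
  hence x: "x \<ge> M0" using y1 by simp
  have "x > 0" using x M0_pos by simp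
  then show "\<exists>y. DERIV P2' x :> y \<and> 0 < y" using P2'_deriv P2d_pos[OF x] by blast
qed

end

lemma finish:
  fixes f g g' :: "real \<Rightarrow> real"
  assumes g_der: "\<And>y. y > 0 \<Longrightarrow> (g has_real_derivative g' y) (at y)"
    and eq: "\<And>y. y \<in> {ys..hi} \<Longrightarrow> f y = g y"
    and mono: "strict_mono_on {ys..hi} g'" and end0: "g' hi \<le> 0"
    and ys: "0 < ys" "ys \<le> hi"
  shows "continuous_on {ys..hi} f \<and> strict_convex_on {ys..hi} f \<and> antimono_on {ys..hi} f"
proof -
  have cg: "continuous_on {ys..hi} g"
  proof (rule continuous_at_imp_continuous_on, intro ballI)
    fix x assume "x \<in> {ys..hi}"
    hence "x > 0" using ys by simp
    then show "isCont g x" using DERIV_isCont[OF g_der] by blast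
  qed
  have der: "\<And>y. ys < y \<Longrightarrow> y < hi \<Longrightarrow> (g has_real_derivative g' y) (at y)"
    using g_der ys by simp
  have cv: "strict_convex_on {ys..hi} g \<and> antimono_on {ys..hi} g"
    by (rule convex_from_deriv[OF ys(2) cg der mono end0])
  have "continuous_on {ys..hi} f" using cg eq continuous_on_cong by blast
  moreover have "strict_convex_on {ys..hi} f"
    unfolding strict_convex_on_def
  proof (intro conjI ballI allI impI)
    show "convex {ys..hi}" by simp
    fix x y and t :: real assume x: "x \<in> {ys..hi}" and y: "y \<in> {ys..hi}" and xy: "x \<noteq> y" and t: "0 < t \<and> t < 1"
    have c: "(1 - t) * x + t * y \<in> {ys..hi}"
      using convexD[of "{ys..hi}" x y "1 - t" t] x y t by simp
    have "g ((1 - t) * x + t * y) < (1 - t) * g x + t * g y"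
      using cv x y xy t unfolding strict_convex_on_def by blast
    then show "f ((1 - t) * x + t * y) < (1 - t) * f x + t * f y" using eq[OF c] eq[OF x] eq[OF y] by simp
  qed
  moreover have "antimono_on {ys..hi} f"
  proof (rule monotone_onI)
    fix u v assume u: "u \<in> {ys..hi}" and v: "v \<in> {ys..hi}" and uv: "u \<le> v"
    have "g v \<le> g u" using cv u v uv by (auto simp: monotone_on_def)
    then show "f v \<le> f u" using eq[OF u] eq[OF v] by simp
  qed
  ultimately show ?thesis by blast
qed

context vh begin

lemma ys_props: "0 < ystar a rho b lam p m" "ystar a rho b lam p m \<le> M0"
  using ystar_props[OF a rho b lam0 lam1 p1 p0 Dpos m] by (auto simp: M0_def)

lemma L0_le_b: "Tc \<Longrightarrow> L0 \<le> b"
proof -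
  assume T: Tc
  hence lam: "lam > 0" and "b powr (1 / (p - 1)) / lam \<le> m" by (auto simp: Tc_def)
  hence n: "b powr (1 / (p - 1)) \<le> lam * m" by (simp add: divide_le_eq mult.commute)
  have "L0 \<le> (b powr (1 / (p - 1))) powr (p - 1)"
    unfolding L0_def using n p1 b by (intro powr_mono2') auto
  also have "\<dots> = b" using p1 b by (simp add: powr_powr)
  finally show ?thesis .
qed

lemma L0_gt_b: "\<not> Tc \<Longrightarrow> lam > 0 \<Longrightarrow> L0 > b"
proof -
  assume T: "\<not> Tc" and lam: "lam > 0"
  hence "\<not> b powr (1 / (p - 1)) / lam \<le> m" by (auto simp: Tc_def)
  hence n: "lam * m < b powr (1 / (p - 1))" using lam by (simp add: divide_le_eq mult.commute not_le)
  have "b = (b powr (1 / (p - 1))) powr (p - 1)" using p1 b by (simp add: powr_powr)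
  also have "\<dots> < L0"
    unfolding L0_def using n p1 b lam m0 by (intro powr_less_mono2_neg) auto
  finally show ?thesis .
qed

lemma M0_le_L0: "lam > 0 \<Longrightarrow> M0 \<le> L0"
  unfolding M0_def L0_def using lam1 m0 p1 by (intro powr_mono2') (auto simp: mult_le_cancel_right1)

lemma smono_F:
  assumes lo: "0 < lo" and P: "\<And>u v. u \<in> {lo..hi} \<Longrightarrow> v \<in> {lo..hi} \<Longrightarrow> u < v \<Longrightarrow> P u < P v"
  shows "strict_mono_on {lo..hi} (\<lambda>y. Cm' y + P y)"
proof (rule strict_mono_onI)
  fix u v assume u: "u \<in> {lo..hi}" and v: "v \<in> {lo..hi}" and uv: "u < v"
  have "Cm' u \<le> Cm' v" using Cm'_mono[of u v] u lo uv by simp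
  moreover have "P u < P v" using P u v uv by blast
  ultimately show "Cm' u + P u < Cm' v + P v" by simp
qed

lemma dF1: "y > 0 \<Longrightarrow> ((\<lambda>y. Cm y + P1 y) has_real_derivative Cm' y + P1' y) (at y)"
  using Cm_deriv P1_deriv by (auto intro: DERIV_add)
lemma dF2: "y > 0 \<Longrightarrow> ((\<lambda>y. Cm y + P2 y) has_real_derivative Cm' y + P2' y) (at y)"
  using Cm_deriv P2_deriv by (auto intro: DERIV_add)
lemma dF3: "y > 0 \<Longrightarrow> ((\<lambda>y. Cm y + P3 y) has_real_derivative Cm' y + P3' y) (at y)"
  using Cm_deriv P3_deriv by (auto intro: DERIV_add)

lemma sF1: "lam > 0 \<Longrightarrow> 0 < lo \<Longrightarrow> strict_mono_on {lo..hi} (\<lambda>y. Cm' y + P1' y)"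
  by (rule smono_F) (auto intro: P1'_smono)
lemma sF2: "M0 \<le> lo \<Longrightarrow> strict_mono_on {lo..hi} (\<lambda>y. Cm' y + P2' y)"
  using M0_pos by (intro smono_F) (auto intro: P2'_smono)
lemma sF3: "0 < lo \<Longrightarrow> strict_mono_on {lo..hi} (\<lambda>y. Cm' y + P3' y)"
  by (rule smono_F) (auto intro: P3'_smono)

lemma F1'_b: "Cm' b + P1' b = 0" using Cm'_b P1'_b by simp

lemma main:
  "continuous_on {ystar a rho b lam p m..b} (\<lambda>y. vhat a rho b lam p k y z m)
   \<and> strict_convex_on {ystar a rho b lam p m..b} (\<lambda>y. vhat a rho b lam p k y z m)
   \<and> antimono_on {ystar a rho b lam p m..b} (\<lambda>y. vhat a rho b lam p k y z m)"
proof -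
  define ys where "ys = ystar a rho b lam p m"
  have ys: "0 < ys" "ys \<le> M0" using ys_props by (auto simp: ys_def)
  have ysb: "ys \<le> b" using ys M0_le_b by simp
  define F1 where "F1 = (\<lambda>y. Cm y + P1 y)"
  define F2 where "F2 = (\<lambda>y. Cm y + P2 y)"
  define F3 where "F3 = (\<lambda>y. Cm y + P3 y)"
  define F1' where "F1' = (\<lambda>y. Cm' y + P1' y)"
  define F2' where "F2' = (\<lambda>y. Cm' y + P2' y)"
  define F3' where "F3' = (\<lambda>y. Cm' y + P3' y)"
  have d1: "\<And>y. y > 0 \<Longrightarrow> (F1 has_real_derivative F1' y) (at y)" unfolding F1_def F1'_def by (rule dF1)
  have d2: "\<And>y. y > 0 \<Longrightarrow> (F2 has_real_derivative F2' y) (at y)" unfolding F2_def F2'_def by (rule dF2)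
  have d3: "\<And>y. y > 0 \<Longrightarrow> (F3 has_real_derivative F3' y) (at y)" unfolding F3_def F3'_def by (rule dF3)
  have mM: "F3 M0 = F2 M0" "F3' M0 = F2' M0"
    unfolding F3_def F2_def F3'_def F2'_def using match_M_val match_M_der by auto
  have s3: "strict_mono_on {ys..M0} F3'" unfolding F3'_def using sF3 ys by blast
  have f1b: "F1' b = 0" unfolding F1'_def by (rule F1'_b)
  have vh: "\<And>y. vhat a rho b lam p k y z m = (if 0 < lam \<and> L0 < y then F1 y else if M0 < y then F2 y else F3 y)"
    unfolding vhat_eq F1_def F2_def F3_def L0_def M0_def ..
  show ?thesis
  proof (cases Tc)
    case False
    define g where "g = glue M0 F3 F2"
    define g' where "g' = glue M0 F3' F2'"
    have gd: "\<And>y. y > 0 \<Longrightarrow> (g has_real_derivative g' y) (at y)"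
      unfolding g_def g'_def using glue_deriv[OF d3 d2 M0_pos mM] by blast
    have eq: "\<And>y. y \<in> {ys..b} \<Longrightarrow> vhat a rho b lam p k y z m = g y"
    proof -
      fix y assume y: "y \<in> {ys..b}"
      have "\<not> (0 < lam \<and> L0 < y)" using L0_gt_b[OF False] y by auto
      then show "vhat a rho b lam p k y z m = g y" unfolding vh g_def glue_def by auto
    qed
    have s2: "strict_mono_on {M0..b} F2'" unfolding F2'_def using sF2 by blast
    have mono: "strict_mono_on {ys..b} g'" unfolding g'_def by (rule glue_strict_mono[OF s3 s2 mM(2)])
    have f2b: "F2' b = 0" unfolding F2'_def using Cm'_b P2'_b[OF False] by simp
    have end0: "g' b \<le> 0"
    proof (cases "b \<le> M0")
      case True
      hence "M0 = b" using M0_le_b by simp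
      then show ?thesis unfolding g'_def glue_def using mM(2) f2b by simp
    next
      case False
      then show ?thesis unfolding g'_def glue_def using f2b by simp
    qed
    show ?thesis using finish[OF gd eq mono end0 ys(1) ysb] unfolding ys_def .
  next
    case True
    have lam: "lam > 0" using True by (simp add: Tc_def)
    have L0b: "L0 \<le> b" using L0_le_b[OF True] .
    have hM0L0: "M0 \<le> L0" using M0_le_L0[OF lam] .
    show ?thesis
    proof (cases "lam = 1")
      case l1: True
      have LM: "L0 = M0" unfolding L0_def M0_def using l1 by simp
      define g where "g = glue M0 F3 F1"
      define g' where "g' = glue M0 F3' F1'"
      have m1: "F3 M0 = F1 M0" "F3' M0 = F1' M0"
        unfolding F3_def F1_def F3'_def F1'_def using match_1[OF True l1] by auto
      have gd: "\<And>y. y > 0 \<Longrightarrow> (g has_real_derivative g' y) (at y)"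
        unfolding g_def g'_def using glue_deriv[OF d3 d1 M0_pos m1] by blast
      have eq: "\<And>y. y \<in> {ys..b} \<Longrightarrow> vhat a rho b lam p k y z m = g y"
        unfolding vh g_def glue_def LM using lam by auto
      have s1: "strict_mono_on {M0..b} F1'" unfolding F1'_def using sF1[OF lam] M0_pos by blast
      have mono: "strict_mono_on {ys..b} g'" unfolding g'_def by (rule glue_strict_mono[OF s3 s1 m1(2)])
      have end0: "g' b \<le> 0"
      proof (cases "b \<le> M0")
        case True
        hence "M0 = b" using M0_le_b by simp
        then show ?thesis unfolding g'_def glue_def using m1(2) f1b by simp
      next
        case False
        then show ?thesis unfolding g'_def glue_def using f1b by simp
      qed
      show ?thesis using finish[OF gd eq mono end0 ys(1) ysb] unfolding ys_def .
    next
      case l1: False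
      define h where "h = glue L0 F2 F1"
      define h' where "h' = glue L0 F2' F1'"
      define g where "g = glue M0 F3 h"
      define g' where "g' = glue M0 F3' h'"
      have mL: "F2 L0 = F1 L0" "F2' L0 = F1' L0"
        unfolding F2_def F1_def F2'_def F1'_def using match_L_val[OF True] match_L_der[OF True] by auto
      have hd: "\<And>y. y > 0 \<Longrightarrow> (h has_real_derivative h' y) (at y)"
        unfolding h_def h'_def using glue_deriv[OF d2 d1 L0_pos[OF lam] mL] by blast
      have hM: "h M0 = F2 M0" "h' M0 = F2' M0" using hM0L0 by (auto simp: h_def h'_def glue_def)
      have mM2: "F3 M0 = h M0" "F3' M0 = h' M0" using mM hM by auto
      have gd: "\<And>y. y > 0 \<Longrightarrow> (g has_real_derivative g' y) (at y)"
        unfolding g_def g'_def using glue_deriv[OF d3 hd M0_pos mM2] by blast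
      have eq: "\<And>y. y \<in> {ys..b} \<Longrightarrow> vhat a rho b lam p k y z m = g y"
        unfolding vh g_def h_def glue_def using lam hM0L0 by auto
      have s2: "strict_mono_on {M0..L0} F2'" unfolding F2'_def using sF2 by blast
      have s1: "strict_mono_on {L0..b} F1'" unfolding F1'_def using sF1[OF lam] L0_pos[OF lam] by blast
      have sh: "strict_mono_on {M0..b} h'" unfolding h'_def by (rule glue_strict_mono[OF s2 s1 mL(2)])
      have mono: "strict_mono_on {ys..b} g'" unfolding g'_def by (rule glue_strict_mono[OF s3 sh mM2(2)])
      have hb: "h' b = 0"
      proof (cases "b \<le> L0")
        case True
        hence "L0 = b" using L0b by simp
        then show ?thesis unfolding h'_def glue_def using mL(2) f1b by simp
      next
        case False
        then show ?thesis unfolding h'_def glue_def using f1b by simp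
      qed
      have end0: "g' b \<le> 0"
      proof (cases "b \<le> M0")
        case True
        hence "M0 = b" using M0_le_b by simp
        then show ?thesis unfolding g'_def glue_def using mM2(2) hb by simp
      next
        case False
        then show ?thesis unfolding g'_def glue_def using hb by simp
      qed
      show ?thesis using finish[OF gd eq mono end0 ys(1) ysb] unfolding ys_def .
    qed
  qed
qed

end

lemma alpha_pos:
  fixes mu :: "real^'n" and sig :: "real^'n^'n"
  assumes inv: "invertible sig" and mu: "mu \<noteq> 0"
  shows "alphaC mu sig > 0"
proof -
  define P where "P = sig ** transpose sig"
  have iP: "invertible P" unfolding P_def by (intro invertible_mult inv transpose_invertible)
  have "\<exists>A'. P ** A' = mat 1 \<and> A' ** P = mat 1" using iP unfolding invertible_def .
  hence Pinv: "P ** matrix_inv P = mat 1" unfolding matrix_inv_def by (rule someI_ex[THEN conjunct1])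
  define w where "w = matrix_inv P *v mu"
  define v where "v = transpose sig *v w"
  have mu_eq: "mu = sig *v v"
  proof -
    have h1: "P *v w = mu" unfolding w_def matrix_vector_mul_assoc Pinv by simp
    have h2: "sig *v v = P *v w" unfolding v_def P_def by (rule matrix_vector_mul_assoc)
    show ?thesis using h1 h2 by simp
  qed
  have "mu \<bullet> w = v \<bullet> v"
  proof -
    have "mu \<bullet> w = w \<bullet> (sig *v v)" by (simp add: mu_eq inner_commute)
    also have "\<dots> = (w v* sig) \<bullet> v" by (simp add: dot_lmul_matrix)
    also have "\<dots> = v \<bullet> v" unfolding v_def by simp
    finally show ?thesis .
  qed
  moreover have "v \<noteq> 0" using mu mu_eq by auto
  ultimately have "mu \<bullet> w > 0" by simp
  then show ?thesis unfolding alphaC_def P_def[symmetric] w_def[symmetric] by simp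
qed

lemma kappa_bounds:
  fixes A e rho muZ :: real
  assumes A: "A > 0" and r: "rho > muZ" and e: "e \<le> muZ"
  shows "0 < kappaC A e rho muZ" "kappaC A e rho muZ \<le> 1"
proof -
  define B0 where "B0 = rho - e - A"
  have s1: "sqrt (B0^2 + 4 * A * (rho - muZ)) > sqrt (B0^2)"
    using A r by (intro real_sqrt_less_mono) simp
  hence "sqrt (B0^2 + 4 * A * (rho - muZ)) > B0" by (simp add: real_sqrt_abs)
  then show "0 < kappaC A e rho muZ" unfolding kappaC_def B0_def[symmetric] using A by simp
  have pos: "2 * A + B0 \<ge> 0" using A r e by (simp add: B0_def)
  have "B0^2 + 4 * A * (rho - muZ) \<le> (2 * A + B0)^2"
    using A e by (simp add: B0_def power2_eq_square algebra_simps mult_left_mono)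
  hence "sqrt (B0^2 + 4 * A * (rho - muZ)) \<le> sqrt ((2 * A + B0)^2)" by (rule real_sqrt_le_mono)
  hence "sqrt (B0^2 + 4 * A * (rho - muZ)) \<le> 2 * A + B0" using pos by simp
  then show "kappaC A e rho muZ \<le> 1" unfolding kappaC_def B0_def[symmetric] using A by simp
qed

theorem lemma3p2:
  fixes mu :: "real^'n" and sig :: "real^'n^'n" and gam :: "real^'n"
    and muZ sZ rho b lam p :: real
  assumes sig_inv: "invertible sig"
    and mu_nz: "mu \<noteq> 0"
    and sZ: "sZ \<ge> 0"
    and gam: "norm gam = 1"
    and rho_pos: "rho > 0"
    and b_pos: "b > 0"
    and lam: "0 \<le> lam" "lam \<le> 1"
    and p: "p < 1" "p \<noteq> 0"
    and muZ_eta: "muZ \<ge> etaC mu sig sZ gam"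
    and rho_rho0: "rho > rho0C (alphaC mu sig) muZ p"
  shows "\<forall>z m. z \<ge> 0 \<and> m \<ge> b powr (1 / (p - 1)) \<longrightarrow>
     (let a = alphaC mu sig;
          k = kappaC a (etaC mu sig sZ gam) rho muZ;
          I = {ystar a rho b lam p m .. b};
          f = (\<lambda>y. vhat a rho b lam p k y z m)
      in continuous_on I f \<and> strict_convex_on I f \<and> antimono_on I f)"
proof (intro allI impI)
  fix z m :: real
  assume zm: "z \<ge> 0 \<and> m \<ge> b powr (1 / (p - 1))"
  have a: "alphaC mu sig > 0" by (rule alpha_pos[OF sig_inv mu_nz])
  have rmu: "rho > muZ" using rho_rho0 unfolding rho0C_def by (auto split: if_splits)
  have D: "rho * (1 - p) - alphaC mu sig * p > 0"
  proof (cases "0 < p")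
    case True
    hence "rho > alphaC mu sig * p / (1 - p)" using rho_rho0 unfolding rho0C_def by auto
    then show ?thesis using p by (simp add: field_simps)
  next
    case False
    hence "p < 0" using p by simp
    hence "alphaC mu sig * p < 0" using a by (simp add: mult_pos_neg)
    moreover have "rho * (1 - p) > 0" using rho_pos p by simp
    ultimately show ?thesis by simp
  qed
  have kb: "0 < kappaC (alphaC mu sig) (etaC mu sig sZ gam) rho muZ"
      "kappaC (alphaC mu sig) (etaC mu sig sZ gam) rho muZ \<le> 1"
    using kappa_bounds[OF a rmu muZ_eta] by auto
  interpret V: vh "alphaC mu sig" rho b lam p "kappaC (alphaC mu sig) (etaC mu sig sZ gam) rho muZ" z m
    by unfold_locales (use a rho_pos b_pos lam p D kb zm in auto)
  show "let a = alphaC mu sig;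
          k = kappaC a (etaC mu sig sZ gam) rho muZ;
          I = {ystar a rho b lam p m .. b};
          f = (\<lambda>y. vhat a rho b lam p k y z m)
      in continuous_on I f \<and> strict_convex_on I f \<and> antimono_on I f"
    unfolding Let_def using V.main .
qed

end
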